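(* Let $P$ be the Borel probability measure on $\mathbb{R}$ with density $f(x)=\frac32$ if $x\in J_1:=[0,\frac13]$, $f(x)=\frac94$ if $x\in J_2\cup J_3$ where $J_2:=[\frac23,\frac79]$ and $J_3:=[\frac89,1]$, and $f(x)=0$ otherwise. Let $n\ge3$ and let $\alpha_n$ be an optimal set of $n$-means for $P$. Write $\alpha_{n,j}:=\alpha_n\cap J_j$ and $n_j:=\mathrm{card}(\alpha_{n,j})$ for $1\le j\le3$. Then each $\alpha_{n,j}$ is an optimal set of $n_j$-means for $P(\cdot|J_j)$, $n=n_1+n_2+n_3$, and \[V_n=\sum_{j=1}^3V(P,\alpha_{n,j},J_j)=\frac{1}{216}\frac{1}{n_1^2}+\frac{1}{3888}\Big(\frac{1}{n_2^2}+\frac{1}{n_3^2}\Big).\]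
   Context: $P(\cdot|B)=P(\cdot\cap B)/P(B)$. For a Borel probability $Q$, an optimal set of $n$-means for $Q$ is a set $\alpha$ with $\mathrm{card}(\alpha)\le n$ attaining $\inf\{\int\min_{a\in\alpha}(x-a)^2\,dQ(x):\mathrm{card}(\alpha)\le n\}$; $V_n$ denotes this infimum for $Q=P$. For finite $\alpha$ and Borel $B$, $V(P,\alpha,B):=\int_B\min_{a\in\alpha}(x-a)^2\,dP(x)$. *)

theory Defs
  imports "HOL-Probability.Probability"
begin

definition dist_err :: "real measure \<Rightarrow> real set \<Rightarrow> real set \<Rightarrow> ennreal" where
  "dist_err Q \<alpha> B = (\<integral>\<^sup>+ x. ennreal (Min ((\<lambda>a. (x - a)\<^sup>2) ` \<alpha>)) * indicator B x \<partial>Q)"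

definition quant_err :: "real measure \<Rightarrow> real set \<Rightarrow> ennreal" where
  "quant_err Q \<alpha> = (\<integral>\<^sup>+ x. ennreal (Min ((\<lambda>a. (x - a)\<^sup>2) ` \<alpha>)) \<partial>Q)"

definition codebooks :: "nat \<Rightarrow> real set set" where
  "codebooks n = {\<alpha>. finite \<alpha> \<and> \<alpha> \<noteq> {} \<and> card \<alpha> \<le> n}"

definition Vn :: "real measure \<Rightarrow> nat \<Rightarrow> ennreal" where
  "Vn Q n = (INF \<alpha>\<in>codebooks n. quant_err Q \<alpha>)"

definition optimal_n_means :: "real measure \<Rightarrow> nat \<Rightarrow> real set \<Rightarrow> bool" where
  "optimal_n_means Q n \<alpha> \<longleftrightarrow> \<alpha> \<in> codebooks n \<and> quant_err Q \<alpha> = Vn Q n"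

text \<open>Conditional measure P(.|B) = P(. \<inter> B)/P(B): the library's uniform_measure.\<close>
abbreviation cond_measure :: "real measure \<Rightarrow> real set \<Rightarrow> real measure" where
  "cond_measure M B \<equiv> uniform_measure M B"

definition J1 :: "real set" where "J1 = {0..1/3}"
definition J2 :: "real set" where "J2 = {2/3..7/9}"
definition J3 :: "real set" where "J3 = {8/9..1}"

definition dens :: "real \<Rightarrow> real" where
  "dens x = (if x \<in> J1 then 3/2 else if x \<in> J2 \<union> J3 then 9/4 else 0)"

definition P :: "real measure" where
  "P = density lborel (\<lambda>x. ennreal (dens x))"

end

theory Submission
  imports Defs
begin


definition hm :: "real set \<Rightarrow> real \<Rightarrow> real" where
  "hm B x = Min ((\<lambda>a. (x - a)\<^sup>2) ` B)"

lemma hm_insert: "finite B \<Longrightarrow> B \<noteq> {} \<Longrightarrow> hm (insert t B) x = min ((x-t)\<^sup>2) (hm B x)"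
  unfolding hm_def by (simp add: Min_insert)

lemma hm_single[simp]: "hm {t} x = (x-t)\<^sup>2" unfolding hm_def by simp

lemma hm_le: "finite B \<Longrightarrow> t \<in> B \<Longrightarrow> hm B x \<le> (x-t)\<^sup>2"
  unfolding hm_def by (rule Min_le) auto

lemma hm_ge: "finite B \<Longrightarrow> B \<noteq> {} \<Longrightarrow> (\<And>t. t \<in> B \<Longrightarrow> c \<le> (x-t)\<^sup>2) \<Longrightarrow> c \<le> hm B x"
  unfolding hm_def by (subst Min_ge_iff) auto

lemma hm_nonneg: "finite B \<Longrightarrow> B \<noteq> {} \<Longrightarrow> 0 \<le> hm B x"
  by (rule hm_ge) auto

lemma hm_cont: "finite B \<Longrightarrow> B \<noteq> {} \<Longrightarrow> continuous_on UNIV (hm B)"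
proof (induction B rule: finite_ne_induct)
  case (singleton x) then show ?case by (simp add: continuous_intros)
next
  case (insert x F)
  have "hm (insert x F) = (\<lambda>y. min ((y-x)\<^sup>2) (hm F y))"
    using insert by (simp add: hm_insert fun_eq_iff)
  have "continuous_on UNIV (\<lambda>y. min ((y-x)\<^sup>2) (hm F y))"
    by (intro continuous_on_min continuous_intros insert.IH)
  then show ?case using \<open>hm (insert x F) = _\<close> by simp
qed

lemma hm_integrable: "finite B \<Longrightarrow> B \<noteq> {} \<Longrightarrow> hm B integrable_on {a..b}"
  by (rule integrable_continuous_interval) (meson continuous_on_subset hm_cont subset_UNIV)

definition II :: "real \<Rightarrow> real \<Rightarrow> real set \<Rightarrow> real" where
  "II a b B = integral {a..b} (hm B)"

lemma II_combine: "finite B \<Longrightarrow> B \<noteq> {} \<Longrightarrow> a \<le> c \<Longrightarrow> c \<le> b \<Longrightarrow> II a b B = II a c B + II c b B"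
  unfolding II_def by (metis Henstock_Kurzweil_Integration.integral_combine hm_integrable)

lemma II_nonneg: "finite B \<Longrightarrow> B \<noteq> {} \<Longrightarrow> 0 \<le> II a b B"
  unfolding II_def by (metis atLeastAtMost_iff hm_integrable hm_nonneg integral_nonneg)

lemma sq_integral: fixes c b t :: real assumes "c \<le> b" shows "integral {c..b} (\<lambda>x. (x-t)\<^sup>2) = ((b-t)^3 - (c-t)^3)/3"
proof -
  have "((\<lambda>x. (x-t)\<^sup>2) has_integral ((\<lambda>x. (x-t)^3/3) b - (\<lambda>x. (x-t)^3/3) c)) {c..b}"
  proof (rule fundamental_theorem_of_calculus)
    show "c \<le> b" by (rule assms)
    fix x assume "x \<in> {c..b}"
    have "((\<lambda>x. (x-t)^3/3) has_real_derivative (x-t)\<^sup>2) (at x within {c..b})"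
      by (auto intro!: derivative_eq_intros simp: power2_eq_square)
    then show "((\<lambda>x. (x-t)^3/3) has_vector_derivative (x-t)\<^sup>2) (at x within {c..b})"
      by (simp add: has_real_derivative_iff_has_vector_derivative)
  qed
  then show ?thesis by (simp add: integral_unique)
qed


lemma holder_ab:
  fixes p q a b :: real
  assumes "p > 0" "q > 0" "a \<ge> 0" "b \<ge> 0"
  shows "(p*a + q*b)^3 \<le> (p+q)\<^sup>2 * (p*a^3 + q*b^3)"
proof -
  have e: "(p+q)\<^sup>2*(p*a^3+q*b^3) - (p*a+q*b)^3 = p*q*(a-b)\<^sup>2*(p*(2*a+b)+q*(a+2*b))"
    by (simp add: power2_eq_square power3_eq_cube algebra_simps)
  have "0 \<le> p*q*(a-b)\<^sup>2*(p*(2*a+b)+q*(a+2*b))"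
    using assms by (intro mult_nonneg_nonneg add_nonneg_nonneg) auto
  then show ?thesis using e by linarith
qed

lemma holder2:
  fixes p q u v :: real
  assumes "p > 0" "q > 0" "u \<ge> 0" "v \<ge> 0"
  shows "(u+v)^3/(p+q)\<^sup>2 \<le> u^3/p\<^sup>2 + v^3/q\<^sup>2"
proof -
  have h: "(p*(u/p) + q*(v/q))^3 \<le> (p+q)\<^sup>2 * (p*(u/p)^3 + q*(v/q)^3)"
    using assms by (intro holder_ab) auto
  have "p*(u/p) + q*(v/q) = u+v" using assms by simp
  moreover have "p*(u/p)^3 = u^3/p\<^sup>2" "q*(v/q)^3 = v^3/q\<^sup>2" using assms
    by (simp_all add: power3_eq_cube power2_eq_square)
  ultimately have "(u+v)^3 \<le> (p+q)\<^sup>2 * (u^3/p\<^sup>2 + v^3/q\<^sup>2)" using h by simp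
  moreover have "(p+q)\<^sup>2 > 0" using assms by simp
  ultimately show ?thesis by (simp add: divide_le_eq mult.commute)
qed

lemma pt_left:
  assumes "finite B" "B \<noteq> {}" "\<forall>s\<in>B. s < t" "x \<le> (Max B + t)/2"
  shows "hm (insert t B) x = hm B x"
proof -
  have M: "Max B \<in> B" using assms Max_in by blast
  have "hm B x \<le> (x - Max B)\<^sup>2" using hm_le[OF assms(1) M] .
  also have "\<dots> \<le> (x-t)\<^sup>2"
  proof -
    have "Max B < t" using assms M by blast
    then have "\<bar>x - Max B\<bar> \<le> \<bar>x - t\<bar>" using assms(4) by auto
    then show ?thesis by (metis abs_le_square_iff)
  qed
  finally show ?thesis using hm_insert[OF assms(1,2)] by simp
qed

lemma pt_right:
  assumes "finite B" "B \<noteq> {}" "\<forall>s\<in>B. s < t" "x \<ge> (Max B + t)/2"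
  shows "hm (insert t B) x = (x-t)\<^sup>2"
proof -
  have "(x-t)\<^sup>2 \<le> hm B x"
  proof (rule hm_ge[OF assms(1,2)])
    fix s assume s: "s \<in> B"
    then have "s \<le> Max B" using assms(1) by simp
    moreover have "Max B < t" using assms Max_in by blast
    ultimately have "\<bar>x - t\<bar> \<le> \<bar>x - s\<bar>" using assms(4) by auto
    then show "(x-t)\<^sup>2 \<le> (x-s)\<^sup>2" by (metis abs_le_square_iff)
  qed
  then show ?thesis using hm_insert[OF assms(1,2)] by simp
qed

lemma split_R:
  assumes "finite B" "B \<noteq> {}" "\<forall>s\<in>B. s < t" "a \<le> b"
  defines "c \<equiv> max a (min b ((Max B + t)/2))"
  shows "a \<le> c \<and> c \<le> b \<and> II a b (insert t B) = II a c B + integral {c..b} (\<lambda>x. (x-t)\<^sup>2)"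
proof -
  let ?m = "(Max B + t)/2"
  have ac: "a \<le> c" "c \<le> b" using assms(4) unfolding c_def by auto
  have fi: "finite (insert t B)" "insert t B \<noteq> {}" using assms by auto
  have "II a b (insert t B) = II a c (insert t B) + II c b (insert t B)"
    by (rule II_combine[OF fi ac])
  moreover have "II a c (insert t B) = II a c B"
    unfolding II_def
  proof (rule integral_spike[of "{c}"])
    fix x assume x: "x \<in> {a..c} - {c}"
    then have "x < c" by auto
    then have "x \<le> ?m" using x unfolding c_def by (auto simp: max_def min_def split: if_splits)
    then show "hm B x = hm (insert t B) x" using pt_left[OF assms(1-3)] by simp
  qed auto
  moreover have "II c b (insert t B) = integral {c..b} (\<lambda>x. (x-t)\<^sup>2)"
    unfolding II_def
  proof (rule integral_spike[of "{c}"])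
    fix x assume x: "x \<in> {c..b} - {c}"
    then have "x > c" "x \<le> b" by auto
    then have "x \<ge> ?m" unfolding c_def by (auto simp: max_def min_def split: if_splits)
    then show "(x-t)\<^sup>2 = hm (insert t B) x" using pt_right[OF assms(1-3)] by simp
  qed auto
  ultimately show ?thesis using ac by simp
qed

lemma pt_left2:
  assumes "finite B" "B \<noteq> {}" "\<forall>s\<in>B. t < s" "x \<le> (Min B + t)/2"
  shows "hm (insert t B) x = (x-t)\<^sup>2"
proof -
  have "(x-t)\<^sup>2 \<le> hm B x"
  proof (rule hm_ge[OF assms(1,2)])
    fix s assume s: "s \<in> B"
    then have "Min B \<le> s" using assms(1) by simp
    moreover have "t < Min B" using assms Min_in by blast
    ultimately have "\<bar>x - t\<bar> \<le> \<bar>x - s\<bar>" using assms(4) by auto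
    then show "(x-t)\<^sup>2 \<le> (x-s)\<^sup>2" by (metis abs_le_square_iff)
  qed
  then show ?thesis using hm_insert[OF assms(1,2)] by simp
qed

lemma pt_right2:
  assumes "finite B" "B \<noteq> {}" "\<forall>s\<in>B. t < s" "x \<ge> (Min B + t)/2"
  shows "hm (insert t B) x = hm B x"
proof -
  have M: "Min B \<in> B" using assms Min_in by blast
  have "hm B x \<le> (x - Min B)\<^sup>2" using hm_le[OF assms(1) M] .
  also have "\<dots> \<le> (x-t)\<^sup>2"
  proof -
    have "t < Min B" using assms M by blast
    then have "\<bar>x - Min B\<bar> \<le> \<bar>x - t\<bar>" using assms(4) by auto
    then show ?thesis by (metis abs_le_square_iff)
  qed
  finally show ?thesis using hm_insert[OF assms(1,2)] by simp
qed

lemma split_L: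
  assumes "finite B" "B \<noteq> {}" "\<forall>s\<in>B. t < s" "a \<le> b"
  defines "c \<equiv> max a (min b ((Min B + t)/2))"
  shows "a \<le> c \<and> c \<le> b \<and> II a b (insert t B) = integral {a..c} (\<lambda>x. (x-t)\<^sup>2) + II c b B"
proof -
  let ?m = "(Min B + t)/2"
  have ac: "a \<le> c" "c \<le> b" using assms(4) unfolding c_def by auto
  have fi: "finite (insert t B)" "insert t B \<noteq> {}" using assms by auto
  have "II a b (insert t B) = II a c (insert t B) + II c b (insert t B)"
    by (rule II_combine[OF fi ac])
  moreover have "II a c (insert t B) = integral {a..c} (\<lambda>x. (x-t)\<^sup>2)"
    unfolding II_def
  proof (rule integral_spike[of "{c}"])
    fix x assume x: "x \<in> {a..c} - {c}"
    then have "x < c" by auto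
    then have "x \<le> ?m" using x unfolding c_def by (auto simp: max_def min_def split: if_splits)
    then show "(x-t)\<^sup>2 = hm (insert t B) x" using pt_left2[OF assms(1-3)] by simp
  qed auto
  moreover have "II c b (insert t B) = II c b B"
    unfolding II_def
  proof (rule integral_spike[of "{c}"])
    fix x assume x: "x \<in> {c..b} - {c}"
    then have "x > c" "x \<le> b" by auto
    then have "x \<ge> ?m" unfolding c_def by (auto simp: max_def min_def split: if_splits)
    then show "hm B x = hm (insert t B) x" using pt_right2[OF assms(1-3)] by simp
  qed auto
  ultimately show ?thesis using ac by simp
qed


lemma sq_lb: fixes c b t :: real assumes "c \<le> b"
  shows "(b-c)^3/12 \<le> integral {c..b} (\<lambda>x. (x-t)\<^sup>2)"
proof -
  have "(b-c)^3/4 \<le> (b-t)^3 - (c-t)^3"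
  proof -
    have "4*((b-t)^3 - (c-t)^3) - (b-c)^3 = (b-c) * 3 * ((b-t)+(c-t))\<^sup>2"
      by (simp add: power2_eq_square power3_eq_cube algebra_simps)
    moreover have "0 \<le> (b-c) * 3 * ((b-t)+(c-t))\<^sup>2" using assms by simp
    ultimately have "(b-c)^3 \<le> 4*((b-t)^3 - (c-t)^3)" by linarith
    then show ?thesis by simp
  qed
  then have "(b-c)^3/4/3 \<le> ((b-t)^3 - (c-t)^3)/3" by (rule divide_right_mono) simp
  then show ?thesis using sq_integral[OF assms, of t] by simp
qed

lemma sq_lb_R: fixes c b t :: real assumes "c \<le> b" "b \<le> t"
  shows "(b-c)^3/3 \<le> integral {c..b} (\<lambda>x. (x-t)\<^sup>2)"
proof -
  have "(b-c)^3 \<le> (b-t)^3 - (c-t)^3"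
  proof -
    have "(b-t)^3 - (c-t)^3 - (b-c)^3 = 3*(b-c)*(t-b)*(t-c)"
      by (simp add: power2_eq_square power3_eq_cube algebra_simps)
    moreover have "0 \<le> 3*(b-c)*(t-b)*(t-c)" using assms by simp
    ultimately show ?thesis by linarith
  qed
  then show ?thesis using sq_integral[OF assms(1)] by simp
qed

lemma sq_lb_L: fixes c b t :: real assumes "c \<le> b" "t \<le> c"
  shows "(b-c)^3/3 \<le> integral {c..b} (\<lambda>x. (x-t)\<^sup>2)"
proof -
  have "(b-c)^3 \<le> (b-t)^3 - (c-t)^3"
  proof -
    have "(b-t)^3 - (c-t)^3 - (b-c)^3 = 3*(b-c)*(b-t)*(c-t)"
      by (simp add: power2_eq_square power3_eq_cube algebra_simps)
    moreover have "0 \<le> 3*(b-c)*(b-t)*(c-t)" using assms by simp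
    ultimately show ?thesis by linarith
  qed
  then show ?thesis using sq_integral[OF assms(1)] by simp
qed

lemma sq_lb_far: fixes c b t r :: real assumes "c \<le> b" "0 \<le> r" "b + r \<le> t \<or> t \<le> c - r"
  shows "(b-c)*r\<^sup>2 \<le> integral {c..b} (\<lambda>x. (x-t)\<^sup>2)"
proof -
  have "3*(b-c)*r\<^sup>2 \<le> (b-t)^3 - (c-t)^3"
  proof (cases "b + r \<le> t")
    case True
    have "(b-t)^3 - (c-t)^3 = (b-c)*((t-c)\<^sup>2 + (t-c)*(t-b) + (t-b)\<^sup>2)" (is "_ = _ * ?X")
      by (simp add: power2_eq_square power3_eq_cube algebra_simps)
    moreover have "r\<^sup>2 \<le> (t-c)\<^sup>2" "r\<^sup>2 \<le> (t-c)*(t-b)" "r\<^sup>2 \<le> (t-b)\<^sup>2"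
      using True assms by (auto simp: power2_eq_square intro!: mult_mono)
    moreover have "3*r\<^sup>2 \<le> ?X" using calculation(2-4) by linarith
    ultimately show ?thesis using assms(1) mult_left_mono[of "3*r\<^sup>2" ?X "b-c"]
      by (simp add: algebra_simps)
  next
    case False
    then have F: "t \<le> c - r" using assms by auto
    have "(b-t)^3 - (c-t)^3 = (b-c)*((b-t)\<^sup>2 + (b-t)*(c-t) + (c-t)\<^sup>2)" (is "_ = _ * ?X")
      by (simp add: power2_eq_square power3_eq_cube algebra_simps)
    moreover have "r\<^sup>2 \<le> (b-t)\<^sup>2" "r\<^sup>2 \<le> (b-t)*(c-t)" "r\<^sup>2 \<le> (c-t)\<^sup>2"
      using F assms by (auto simp: power2_eq_square intro!: mult_mono)
    moreover have "3*r\<^sup>2 \<le> ?X" using calculation(2-4) by linarith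
    ultimately show ?thesis using assms(1) mult_left_mono[of "3*r\<^sup>2" ?X "b-c"]
      by (simp add: algebra_simps)
  qed
  then have h9: "3*(b-c)*r\<^sup>2/3 \<le> ((b-t)^3 - (c-t)^3)/3" by (rule divide_right_mono) simp
  have e9: "(b-c)*r\<^sup>2 = 3*(b-c)*r\<^sup>2/3" by simp
  show ?thesis unfolding sq_integral[OF assms(1), of t] using e9 h9 by (rule ord_eq_le_trans)
qed

lemma hm_single_fun: "hm {t} = (\<lambda>x. (x-t)\<^sup>2)" by (simp add: fun_eq_iff)

lemma II_single: "a \<le> b \<Longrightarrow> II a b {t} = ((b-t)^3 - (a-t)^3)/3"
  unfolding II_def hm_single_fun by (simp add: sq_integral)

lemma remove_max:
  fixes B :: "real set"
  assumes "finite B" "card B \<ge> 2"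
  shows "finite (B - {Max B}) \<and> B - {Max B} \<noteq> {} \<and> card (B - {Max B}) = card B - 1
         \<and> (\<forall>s\<in>B - {Max B}. s < Max B) \<and> insert (Max B) (B - {Max B}) = B"
proof -
  have ne: "B \<noteq> {}" using assms by auto
  have M: "Max B \<in> B" using Max_in[OF assms(1) ne] .
  have "card (B - {Max B}) = card B - 1" using M assms by simp
  moreover have "B - {Max B} \<noteq> {}"
  proof
    assume "B - {Max B} = {}"
    then have "card (B - {Max B}) = 0" by (simp only: card.empty)
    then have "card B - 1 = 0" using calculation by linarith
    with assms show False by simp
  qed
  moreover have "\<forall>s\<in>B - {Max B}. s < Max B" using Max_ge[OF assms(1)] by (auto simp: less_le)
  moreover have "\<not> B \<subseteq> {Max B}"
  proof
    assume "B \<subseteq> {Max B}"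
    then have "card B \<le> card {Max B}" by (intro card_mono) auto
    with assms show False by simp
  qed
  ultimately show ?thesis using assms M by auto
qed

lemma remove_min:
  fixes B :: "real set"
  assumes "finite B" "card B \<ge> 2"
  shows "finite (B - {Min B}) \<and> B - {Min B} \<noteq> {} \<and> card (B - {Min B}) = card B - 1
         \<and> (\<forall>s\<in>B - {Min B}. Min B < s) \<and> insert (Min B) (B - {Min B}) = B"
proof -
  have ne: "B \<noteq> {}" using assms by auto
  have M: "Min B \<in> B" using Min_in[OF assms(1) ne] .
  have "card (B - {Min B}) = card B - 1" using M assms by simp
  moreover have "B - {Min B} \<noteq> {}"
  proof
    assume "B - {Min B} = {}"
    then have "card (B - {Min B}) = 0" by (simp only: card.empty)
    then have "card B - 1 = 0" using calculation by linarith
    with assms show False by simp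
  qed
  moreover have "\<forall>s\<in>B - {Min B}. Min B < s" using Min_le[OF assms(1)] by (auto simp: less_le)
  moreover have "\<not> B \<subseteq> {Min B}"
  proof
    assume "B \<subseteq> {Min B}"
    then have "card B \<le> card {Min B}" by (intro card_mono) auto
    with assms show False by simp
  qed
  ultimately show ?thesis using assms M by auto
qed

lemma U_aux: "\<forall>B a b. finite B \<longrightarrow> card B = n \<longrightarrow> n \<ge> 1 \<longrightarrow> a \<le> b \<longrightarrow> (b-a)^3/(12*(real n)\<^sup>2) \<le> II a b B"
proof (induction n)
  case 0 then show ?case by simp
next
  case (Suc k)
  show ?case
  proof (intro allI impI)
    fix B :: "real set" and a b :: real
    assume B: "finite B" "card B = Suc k" "Suc k \<ge> 1" "a \<le> b"
    show "(b-a)^3/(12*(real (Suc k))\<^sup>2) \<le> II a b B"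
    proof (cases "k = 0")
      case True
      then obtain t where "B = {t}" using B card_1_singletonE by auto
      then show ?thesis using True B sq_lb[of a b t] by (simp add: II_def hm_single_fun)
    next
      case False
      let ?t = "Max B" let ?B = "B - {Max B}"
      have R: "finite ?B" "?B \<noteq> {}" "card ?B = k" "\<forall>s\<in>?B. s < ?t" "insert ?t ?B = B"
        using remove_max[OF B(1)] B False by auto
      obtain c where c: "a \<le> c" "c \<le> b" "II a b B = II a c ?B + integral {c..b} (\<lambda>x. (x-?t)\<^sup>2)"
        using split_R[OF R(1,2,4) B(4)] R(5) by metis
      have IH: "(c-a)^3/(12*(real k)\<^sup>2) \<le> II a c ?B" using Suc.IH R c False by auto
      have S: "(b-c)^3/12 \<le> integral {c..b} (\<lambda>x. (x-?t)\<^sup>2)" using sq_lb c by auto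
      have H: "((c-a)+(b-c))^3/(real k + 1)\<^sup>2 \<le> (c-a)^3/(real k)\<^sup>2 + (b-c)^3/1\<^sup>2"
        using False c by (intro holder2) auto
      have "(b-a)^3/(12*(real (Suc k))\<^sup>2) = ((c-a)+(b-c))^3/(real k + 1)\<^sup>2 / 12" by simp
      also have "\<dots> \<le> ((c-a)^3/(real k)\<^sup>2 + (b-c)^3/1\<^sup>2)/12" using H by (simp add: divide_right_mono)
      also have "\<dots> = (c-a)^3/(12*(real k)\<^sup>2) + (b-c)^3/12" by simp
      also have "\<dots> \<le> II a b B" using IH S c by linarith
      finally show ?thesis .
    qed
  qed
qed

lemma U: "finite B \<Longrightarrow> B \<noteq> {} \<Longrightarrow> a \<le> b \<Longrightarrow> (b-a)^3/(12*(real (card B))\<^sup>2) \<le> II a b B"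
  using U_aux[of "card B"] by (simp add: Suc_leI card_gt_0_iff)



lemma hm_mono: "finite B \<Longrightarrow> B' \<subseteq> B \<Longrightarrow> B' \<noteq> {} \<Longrightarrow> hm B x \<le> hm B' x"
  unfolding hm_def by (rule Min_antimono) auto

lemma hm_reduce:
  assumes "finite B" "B' \<subseteq> B" "B' \<noteq> {}" "\<forall>t\<in>B. \<exists>s\<in>B'. (x-s)\<^sup>2 \<le> (x-t)\<^sup>2"
  shows "hm B x = hm B' x"
proof -
  have fB': "finite B'" using assms finite_subset by blast
  have "hm B' x \<le> hm B x"
  proof (rule hm_ge[OF assms(1)])
    show "B \<noteq> {}" using assms by auto
    fix t assume "t \<in> B"
    then obtain s where "s \<in> B'" "(x-s)\<^sup>2 \<le> (x-t)\<^sup>2" using assms by auto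
    then show "hm B' x \<le> (x-t)\<^sup>2" using hm_le[OF fB'] by (meson order.trans)
  qed
  then show ?thesis using hm_mono[OF assms(1-3), of x] by (intro order_antisym)
qed

lemma UpR:
  assumes "finite B" "B \<noteq> {}" "a \<le> b" "\<exists>t\<in>B. b \<le> t"
  shows "(b-a)^3/(12*(real (card B) - 1/2)\<^sup>2) \<le> II a b B"
proof (cases "card B = 1")
  case True
  then obtain t where t: "B = {t}" using card_1_singletonE by auto
  then have tb: "b \<le> t" using assms by auto
  have c3: "12*(real (card B) - 1/2)\<^sup>2 = 3" using True by (simp add: power2_eq_square)
  have "(b-a)^3/(12*(real (card B) - 1/2)\<^sup>2) = (b-a)^3/3" by (simp only: c3)
  also have "\<dots> \<le> integral {a..b} (\<lambda>x. (x-t)\<^sup>2)" by (rule sq_lb_R[OF assms(3) tb])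
  also have "\<dots> = II a b B" by (simp add: t II_def hm_single_fun)
  finally show ?thesis .
next
  case False
  have "card B > 0" using assms(1,2) card_gt_0_iff by blast
  then have k2: "card B \<ge> 2" using False by linarith
  let ?t = "Max B" let ?B = "B - {Max B}"
  have R: "finite ?B" "?B \<noteq> {}" "card ?B = card B - 1" "\<forall>s\<in>?B. s < ?t" "insert ?t ?B = B"
    using remove_max[OF assms(1) k2] by auto
  obtain t0 where t0: "t0 \<in> B" "b \<le> t0" using assms(4) by blast
  have tb: "b \<le> ?t" using Max_ge[OF assms(1) t0(1)] t0(2) by linarith
  obtain c where c: "a \<le> c" "c \<le> b" "II a b B = II a c ?B + integral {c..b} (\<lambda>x. (x-?t)\<^sup>2)"
    using split_R[OF R(1,2,4) assms(3)] R(5) by metis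
  have IH: "(c-a)^3/(12*(real (card ?B))\<^sup>2) \<le> II a c ?B" using U[OF R(1,2) c(1)] .
  have S: "(b-c)^3/3 \<le> integral {c..b} (\<lambda>x. (x-?t)\<^sup>2)" using sq_lb_R c tb by auto
  have rk: "real (card ?B) = real (card B) - 1" using R(3) k2 by simp
  have H: "((c-a)+(b-c))^3/(real (card ?B) + 1/2)\<^sup>2 \<le> (c-a)^3/(real (card ?B))\<^sup>2 + (b-c)^3/(1/2)\<^sup>2"
    using k2 c rk by (intro holder2) auto
  have "(b-a)^3/(12*(real (card B) - 1/2)\<^sup>2) = ((c-a)+(b-c))^3/(real (card ?B) + 1/2)\<^sup>2 / 12"
    using rk by simp
  also have "\<dots> \<le> ((c-a)^3/(real (card ?B))\<^sup>2 + (b-c)^3/(1/2)\<^sup>2)/12" using H by (simp add: divide_right_mono)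
  also have "\<dots> = (c-a)^3/(12*(real (card ?B))\<^sup>2) + (b-c)^3/3" by (simp add: power2_eq_square)
  also have "\<dots> \<le> II a b B" using IH S c by linarith
  finally show ?thesis .
qed

lemma UpL:
  assumes "finite B" "B \<noteq> {}" "a \<le> b" "\<exists>t\<in>B. t \<le> a"
  shows "(b-a)^3/(12*(real (card B) - 1/2)\<^sup>2) \<le> II a b B"
proof (cases "card B = 1")
  case True
  then obtain t where t: "B = {t}" using card_1_singletonE by auto
  then have tb: "t \<le> a" using assms by auto
  have c3: "12*(real (card B) - 1/2)\<^sup>2 = 3" using True by (simp add: power2_eq_square)
  have "(b-a)^3/(12*(real (card B) - 1/2)\<^sup>2) = (b-a)^3/3" by (simp only: c3)
  also have "\<dots> \<le> integral {a..b} (\<lambda>x. (x-t)\<^sup>2)" by (rule sq_lb_L[OF assms(3) tb])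
  also have "\<dots> = II a b B" by (simp add: t II_def hm_single_fun)
  finally show ?thesis .
next
  case False
  have "card B > 0" using assms(1,2) card_gt_0_iff by blast
  then have k2: "card B \<ge> 2" using False by linarith
  let ?t = "Min B" let ?B = "B - {Min B}"
  have R: "finite ?B" "?B \<noteq> {}" "card ?B = card B - 1" "\<forall>s\<in>?B. ?t < s" "insert ?t ?B = B"
    using remove_min[OF assms(1) k2] by auto
  obtain t0 where t0: "t0 \<in> B" "t0 \<le> a" using assms(4) by blast
  have tb: "?t \<le> a" using Min_le[OF assms(1) t0(1)] t0(2) by linarith
  obtain c where c: "a \<le> c" "c \<le> b" "II a b B = integral {a..c} (\<lambda>x. (x-?t)\<^sup>2) + II c b ?B"
    using split_L[OF R(1,2,4) assms(3)] R(5) by metis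
  have IH: "(b-c)^3/(12*(real (card ?B))\<^sup>2) \<le> II c b ?B" using U[OF R(1,2) c(2)] .
  have S: "(c-a)^3/3 \<le> integral {a..c} (\<lambda>x. (x-?t)\<^sup>2)" using sq_lb_L c tb by auto
  have rk: "real (card ?B) = real (card B) - 1" using R(3) k2 by simp
  have H: "((b-c)+(c-a))^3/(real (card ?B) + 1/2)\<^sup>2 \<le> (b-c)^3/(real (card ?B))\<^sup>2 + (c-a)^3/(1/2)\<^sup>2"
    using k2 c rk by (intro holder2) auto
  have "(b-a)^3/(12*(real (card B) - 1/2)\<^sup>2) = ((b-c)+(c-a))^3/(real (card ?B) + 1/2)\<^sup>2 / 12"
    using rk by simp
  also have "\<dots> \<le> ((b-c)^3/(real (card ?B))\<^sup>2 + (c-a)^3/(1/2)\<^sup>2)/12" using H by (simp add: divide_right_mono)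
  also have "\<dots> = (b-c)^3/(12*(real (card ?B))\<^sup>2) + (c-a)^3/3" by (simp add: power2_eq_square)
  also have "\<dots> \<le> II a b B" using IH S c by linarith
  finally show ?thesis .
qed


lemma ar1:
  fixes s L r k :: real
  assumes "0 \<le> s" "s \<le> L" "k \<ge> 1" "L^2 \<le> 4*r^2"
  shows "L^3/(12*k^2) \<le> s^3/(12*k^2) + (L-s)*r^2"
proof -
  have e: "L^3 - s^3 = (L-s)*(L^2 + L * s + s^2)" by (simp add: power2_eq_square power3_eq_cube algebra_simps)
  have "L * s \<le> L * L" using assms by (intro mult_left_mono) auto
  moreover have "s^2 \<le> L^2" using assms by (intro power_mono) auto
  ultimately have "L^2 + L * s + s^2 \<le> 3*L^2" by (simp add: power2_eq_square)
  then have "L^3 - s^3 \<le> (L-s)*(3*L^2)" unfolding e using assms by (intro mult_left_mono) auto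
  also have "\<dots> \<le> (L-s)*(12*r^2)" using assms by (intro mult_left_mono) auto
  finally have A: "L^3 - s^3 \<le> 12*((L-s)*r^2)" by simp
  have k2: "k^2 \<ge> 1" using assms by (simp add: one_le_power)
  have "0 \<le> L^3 - s^3" using assms by (simp add: power_mono)
  then have "(L^3 - s^3)/k^2 \<le> (L^3 - s^3)/1" using k2 by (intro divide_left_mono) auto
  then have "(L^3 - s^3)/k^2 \<le> L^3 - s^3" by simp
  moreover have "(L^3 - s^3)/(12*k^2) = ((L^3 - s^3)/k^2)/12" by simp
  ultimately have "(L^3 - s^3)/(12*k^2) \<le> (L-s)*r^2" using A by linarith
  moreover have "L^3/(12*k^2) = s^3/(12*k^2) + (L^3 - s^3)/(12*k^2)" by (simp add: diff_divide_distrib)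
  ultimately show ?thesis by linarith
qed

lemma ar2:
  fixes s L r k :: real
  assumes "0 \<le> s" "s \<le> L" "k = 1 \<or> k \<ge> 2" "L^2 \<le> 4*r^2" "L > 0"
  shows "L^3/(12*k^2) < s^3/(12*(k-1/2)^2) + (L-s)*r^2"
proof -
  have e: "L^3 - s^3 = (L-s)*(L^2 + L * s + s^2)" by (simp add: power2_eq_square power3_eq_cube algebra_simps)
  have "L * s \<le> L * L" using assms by (intro mult_left_mono) auto
  moreover have "s^2 \<le> L^2" using assms by (intro power_mono) auto
  ultimately have "L^2 + L * s + s^2 \<le> 3*L^2" by (simp add: power2_eq_square)
  then have "L^3 - s^3 \<le> (L-s)*(3*L^2)" unfolding e using assms by (intro mult_left_mono) auto
  also have "\<dots> \<le> (L-s)*(12*r^2)" using assms by (intro mult_left_mono) auto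
  finally have A: "L^3 - s^3 \<le> 12*((L-s)*r^2)" by simp
  have B0: "(L-s)*(3*L^2) \<le> (L-s)*(12*r^2)" using assms by (intro mult_left_mono) auto
  have B: "(L-s)*(3*L^2) \<le> 12*((L-s)*r^2)" using B0 by (simp add: algebra_simps)
  show ?thesis
  proof (cases "k = 1")
    case True
    have "0 < (2 * s-L)^2*(s+L) + L^3" using assms by (simp add: add_nonneg_pos)
    moreover have "(2 * s-L)^2*(s+L) + L^3 = 4 * s^3 + (L-s)*(3*L^2) - L^3"
      by (simp add: power2_eq_square power3_eq_cube algebra_simps)
    ultimately have "L^3 < 4 * s^3 + 12*((L-s)*r^2)" using B by linarith
    then show ?thesis using True by (simp add: power2_eq_square)
  next
    case False
    then have k: "k \<ge> 2" using assms by auto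
    have kk: "(k-1/2)^2 \<ge> 1" using k by (simp add: one_le_power)
    have "0 \<le> L^3 - s^3" using assms by (simp add: power_mono)
    then have "(L^3 - s^3)/(k-1/2)^2 \<le> (L^3 - s^3)/1" using kk k by (intro divide_left_mono) auto
    then have "(L^3 - s^3)/(k-1/2)^2 \<le> L^3 - s^3" by simp
    moreover have "(L^3 - s^3)/(12*(k-1/2)^2) = ((L^3 - s^3)/(k-1/2)^2)/12" by simp
    ultimately have C: "(L^3 - s^3)/(12*(k-1/2)^2) \<le> (L-s)*r^2" using A by linarith
    have "L^3/(12*k^2) < L^3/(12*(k-1/2)^2)"
      using k assms by (intro divide_strict_left_mono) (auto simp: power_strict_mono)
    also have "L^3/(12*(k-1/2)^2) = s^3/(12*(k-1/2)^2) + (L^3 - s^3)/(12*(k-1/2)^2)"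
      by (simp add: diff_divide_distrib)
    finally show ?thesis using C by linarith
  qed
qed


lemma II_cong: "(\<And>x. x \<in> {a..b} \<Longrightarrow> hm B x = hm B' x) \<Longrightarrow> II a b B = II a b B'"
  unfolding II_def by (rule integral_cong) auto

lemma FarR:
  assumes "finite B" "A \<subseteq> B" "A \<noteq> {}" "\<forall>t\<in>B-A. b + r \<le> t" "\<forall>s\<in>A. \<forall>t\<in>B-A. s < t"
    "a \<le> b" "0 \<le> r"
  shows "\<exists>c. a \<le> c \<and> c \<le> b \<and> II a c A + (b-c)*r\<^sup>2 \<le> II a b B"
proof (cases "B - A = {}")
  case True
  then have "B = A" using assms by auto
  then show ?thesis using assms by (intro exI[of _ b]) auto
next
  case False
  have fA: "finite A" using assms finite_subset by blast
  have fBA: "finite (B - A)" using assms by auto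
  let ?t = "Min (B - A)"
  have t: "?t \<in> B - A" using Min_in[OF fBA False] .
  have tle: "\<And>u. u \<in> B - A \<Longrightarrow> ?t \<le> u" using Min_le[OF fBA] by blast
  have At: "\<forall>s\<in>A. s < ?t" using assms(5) t by blast
  have eq: "II a b B = II a b (insert ?t A)"
  proof (rule II_cong)
    fix x assume x: "x \<in> {a..b}"
    show "hm B x = hm (insert ?t A) x"
    proof (rule hm_reduce[OF assms(1)])
      show "insert ?t A \<subseteq> B" using t assms by auto
      show "insert ?t A \<noteq> {}" by simp
      show "\<forall>u\<in>B. \<exists>s\<in>insert ?t A. (x-s)\<^sup>2 \<le> (x-u)\<^sup>2"
      proof
        fix u assume u: "u \<in> B"
        show "\<exists>s\<in>insert ?t A. (x-s)\<^sup>2 \<le> (x-u)\<^sup>2"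
        proof (cases "u \<in> A")
          case True then show ?thesis by auto
        next
          case False
          then have "?t \<le> u" using tle u by auto
          moreover have "b + r \<le> ?t" using assms(4) t by blast
          ultimately have "\<bar>x - ?t\<bar> \<le> \<bar>x - u\<bar>" using x assms(7) by auto
          then show ?thesis by (metis abs_le_square_iff insertI1)
        qed
      qed
    qed
  qed
  obtain c where c: "a \<le> c" "c \<le> b" "II a b (insert ?t A) = II a c A + integral {c..b} (\<lambda>x. (x-?t)\<^sup>2)"
    using split_R[OF fA assms(3) At assms(6)] by metis
  have "(b-c)*r\<^sup>2 \<le> integral {c..b} (\<lambda>x. (x-?t)\<^sup>2)"
    using assms(4) t c assms(7) by (intro sq_lb_far) auto
  then show ?thesis using c eq by (intro exI[of _ c]) auto
qed

lemma FarL: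
  assumes "finite B" "A \<subseteq> B" "A \<noteq> {}" "\<forall>t\<in>B-A. t \<le> a - r" "\<forall>s\<in>A. \<forall>t\<in>B-A. t < s"
    "a \<le> b" "0 \<le> r"
  shows "\<exists>c. a \<le> c \<and> c \<le> b \<and> (c-a)*r\<^sup>2 + II c b A \<le> II a b B"
proof (cases "B - A = {}")
  case True
  then have "B = A" using assms by auto
  then show ?thesis using assms by (intro exI[of _ a]) auto
next
  case False
  have fA: "finite A" using assms finite_subset by blast
  have fBA: "finite (B - A)" using assms by auto
  let ?t = "Max (B - A)"
  have t: "?t \<in> B - A" using Max_in[OF fBA False] .
  have tle: "\<And>u. u \<in> B - A \<Longrightarrow> u \<le> ?t" using Max_ge[OF fBA] by blast
  have At: "\<forall>s\<in>A. ?t < s" using assms(5) t by blast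
  have eq: "II a b B = II a b (insert ?t A)"
  proof (rule II_cong)
    fix x assume x: "x \<in> {a..b}"
    show "hm B x = hm (insert ?t A) x"
    proof (rule hm_reduce[OF assms(1)])
      show "insert ?t A \<subseteq> B" using t assms by auto
      show "insert ?t A \<noteq> {}" by simp
      show "\<forall>u\<in>B. \<exists>s\<in>insert ?t A. (x-s)\<^sup>2 \<le> (x-u)\<^sup>2"
      proof
        fix u assume u: "u \<in> B"
        show "\<exists>s\<in>insert ?t A. (x-s)\<^sup>2 \<le> (x-u)\<^sup>2"
        proof (cases "u \<in> A")
          case True then show ?thesis by auto
        next
          case False
          then have "u \<le> ?t" using tle u by auto
          moreover have "?t \<le> a - r" using assms(4) t by blast
          ultimately have "\<bar>x - ?t\<bar> \<le> \<bar>x - u\<bar>" using x assms(7) by auto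
          then show ?thesis by (metis abs_le_square_iff insertI1)
        qed
      qed
    qed
  qed
  obtain c where c: "a \<le> c" "c \<le> b" "II a b (insert ?t A) = integral {a..c} (\<lambda>x. (x-?t)\<^sup>2) + II c b A"
    using split_L[OF fA assms(3) At assms(6)] by metis
  have "(c-a)*r\<^sup>2 \<le> integral {a..c} (\<lambda>x. (x-?t)\<^sup>2)"
    using assms(4) t c assms(7) by (intro sq_lb_far) auto
  then show ?thesis using c eq by (intro exI[of _ c]) auto
qed

lemma M_main:
  assumes "finite B" "N \<subseteq> B" "N \<noteq> {}" "a < b" "0 < r" "b - a \<le> 2*r"
    "\<forall>t\<in>B-N. t \<le> a - r \<or> b + r \<le> t"
    "\<forall>s\<in>N. \<forall>t\<in>B-N. (t \<le> a - r \<longrightarrow> t < s) \<and> (b + r \<le> t \<longrightarrow> s < t)"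
  shows "\<exists>c' c. a \<le> c' \<and> c' \<le> c \<and> c \<le> b \<and> (c'-a)*r\<^sup>2 + II c' c N + (b-c)*r\<^sup>2 \<le> II a b B"
proof -
  let ?A = "B - {t\<in>B-N. b + r \<le> t}"
  have NA: "N \<subseteq> ?A" using assms(2,4,5) by auto
  have AB: "?A \<subseteq> B" by auto
  have fA: "finite ?A" using assms(1) by auto
  obtain c where c: "a \<le> c" "c \<le> b" "II a c ?A + (b-c)*r\<^sup>2 \<le> II a b B"
  proof -
    have "\<exists>c. a \<le> c \<and> c \<le> b \<and> II a c ?A + (b-c)*r\<^sup>2 \<le> II a b B"
    proof (rule FarR[OF assms(1) AB])
      show "?A \<noteq> {}" using NA assms(3) by auto
      show "\<forall>t\<in>B - ?A. b + r \<le> t" by auto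
      show "\<forall>s\<in>?A. \<forall>t\<in>B - ?A. s < t"
      proof (intro ballI)
        fix s t assume s: "s \<in> ?A" and t: "t \<in> B - ?A"
        then have tt: "t \<in> B - N" "b + r \<le> t" by auto
        show "s < t"
        proof (cases "s \<in> N")
          case True then show ?thesis using assms(8) tt by blast
        next
          case False
          then have "s \<in> B - N" "\<not> b + r \<le> s" using s by auto
          then have "s \<le> a - r" using assms(7) by blast
          then show ?thesis using tt assms(4,5) by linarith
        qed
      qed
    qed (use assms in auto)
    then show ?thesis using that by blast
  qed
  obtain c' where c': "a \<le> c'" "c' \<le> c" "(c'-a)*r\<^sup>2 + II c' c N \<le> II a c ?A"
  proof -
    have "\<exists>c'. a \<le> c' \<and> c' \<le> c \<and> (c'-a)*r\<^sup>2 + II c' c N \<le> II a c ?A"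
    proof (rule FarL[OF fA NA assms(3)])
      show "\<forall>t\<in>?A - N. t \<le> a - r" using assms(7) by auto
      show "\<forall>s\<in>N. \<forall>t\<in>?A - N. t < s"
      proof (intro ballI)
        fix s t assume s: "s \<in> N" and t: "t \<in> ?A - N"
        then have "t \<in> B - N" "\<not> b + r \<le> t" by auto
        then have "t \<le> a - r" using assms(7) by blast
        then show "t < s" using assms(8) s \<open>t \<in> B - N\<close> by blast
      qed
    qed (use assms c in auto)
    then show ?thesis using that by blast
  qed
  show ?thesis using c c' by (intro exI[of _ c'] exI[of _ c]) auto
qed

lemma M_bound:
  assumes "finite B" "N \<subseteq> B" "N \<noteq> {}" "a < b" "0 < r" "b - a \<le> 2*r"
    "\<forall>t\<in>B-N. t \<le> a - r \<or> b + r \<le> t"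
    "\<forall>s\<in>N. \<forall>t\<in>B-N. (t \<le> a - r \<longrightarrow> t < s) \<and> (b + r \<le> t \<longrightarrow> s < t)"
  shows "(b-a)^3/(12*(real (card N))\<^sup>2) \<le> II a b B"
    and "(\<exists>s\<in>N. s < a \<or> b < s) \<Longrightarrow> (b-a)^3/(12*(real (card N))\<^sup>2) < II a b B"
proof -
  obtain c' c where cc: "a \<le> c'" "c' \<le> c" "c \<le> b" "(c'-a)*r\<^sup>2 + II c' c N + (b-c)*r\<^sup>2 \<le> II a b B"
    using M_main[OF assms] by blast
  have fN: "finite N" using assms finite_subset by blast
  have k1: "real (card N) \<ge> 1" using fN assms(3) by (simp add: Suc_leI card_gt_0_iff)
  have L2: "(b-a)\<^sup>2 \<le> 4*r\<^sup>2"
  proof -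
    have "(b-a)\<^sup>2 \<le> (2*r)\<^sup>2" using assms by (intro power_mono) auto
    then show ?thesis by (simp add: power_mult_distrib)
  qed
  have ell: "(c'-a)*r\<^sup>2 + (b-c)*r\<^sup>2 = ((b-a) - (c-c'))*r\<^sup>2" by (simp add: algebra_simps)
  have "(b-a)^3/(12*(real (card N))\<^sup>2) \<le> (c-c')^3/(12*(real (card N))\<^sup>2) + ((b-a) - (c-c'))*r\<^sup>2"
    using cc k1 L2 by (intro ar1) auto
  moreover have "(c-c')^3/(12*(real (card N))\<^sup>2) \<le> II c' c N" using U[OF fN assms(3) cc(2)] .
  ultimately show "(b-a)^3/(12*(real (card N))\<^sup>2) \<le> II a b B" using cc(4) ell by linarith
  assume "\<exists>s\<in>N. s < a \<or> b < s"
  then obtain s where s: "s \<in> N" "s < a \<or> b < s" by blast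
  have "(c-c')^3/(12*(real (card N) - 1/2)\<^sup>2) \<le> II c' c N"
  proof (cases "s < a")
    case True
    then show ?thesis using s cc by (intro UpL[OF fN assms(3) cc(2)]) (auto intro!: bexI[of _ s])
  next
    case False
    then show ?thesis using s cc by (intro UpR[OF fN assms(3) cc(2)]) (auto intro!: bexI[of _ s])
  qed
  moreover have "(b-a)^3/(12*(real (card N))\<^sup>2) < (c-c')^3/(12*(real (card N) - 1/2)\<^sup>2) + ((b-a) - (c-c'))*r\<^sup>2"
  proof (rule ar2)
    have c0: "card N > 0" using fN assms(3) card_gt_0_iff by blast
    show "real (card N) = 1 \<or> real (card N) \<ge> 2"
    proof (cases "card N = 1")
      case False
      then have "card N \<ge> 2" using c0 by linarith
      then show ?thesis by simp
    qed simp
  qed (use cc L2 assms in auto)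
  ultimately show "(b-a)^3/(12*(real (card N))\<^sup>2) < II a b B" using cc(4) ell by linarith
qed


definition Q :: "real \<Rightarrow> real \<Rightarrow> nat \<Rightarrow> real set" where
  "Q a b k = (\<lambda>i. a + (2*real i + 1)*((b-a)/(2*real k))) ` {..<k}"

lemma Q_finite: "finite (Q a b k)" unfolding Q_def by simp

lemma Q_ne: "k \<ge> 1 \<Longrightarrow> Q a b k \<noteq> {}" unfolding Q_def by (simp add: lessThan_empty_iff)

lemma Q_card: assumes "a < b" shows "card (Q a b k) = k"
proof -
  have "inj_on (\<lambda>i. a + (2*real i + 1)*((b-a)/(2*real k))) {..<k}"
  proof (rule inj_onI)
    fix i j assume i: "i \<in> {..<k}" and j: "j \<in> {..<k}"
      and e: "a + (2*real i + 1)*((b-a)/(2*real k)) = a + (2*real j + 1)*((b-a)/(2*real k))"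
    have k: "real k > 0" using i by auto
    from e have "(2*real i + 1)*((b-a)/(2*real k)) = (2*real j + 1)*((b-a)/(2*real k))" by simp
    moreover have "(b-a)/(2*real k) \<noteq> 0" using k assms by simp
    ultimately have "(2*real i + 1) = (2*real j + 1)" by simp
    then show "i = j" by simp
  qed
  then show ?thesis unfolding Q_def by (simp add: card_image)
qed

lemma Q_sub: assumes "a \<le> b" shows "Q a b k \<subseteq> {a..b}"
proof
  fix x assume "x \<in> Q a b k"
  then obtain i where i: "i < k" "x = a + (2*real i + 1)*((b-a)/(2*real k))" unfolding Q_def by auto
  have k: "real k > 0" using i by auto
  have "0 \<le> (2*real i + 1)*((b-a)/(2*real k))" using assms k by simp
  moreover have "(2*real i + 1)*((b-a)/(2*real k)) \<le> b - a"
  proof -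
    have "(2*real i + 1) \<le> 2*real k" using i by linarith
    then have "(2*real i + 1)*((b-a)/(2*real k)) \<le> (2*real k)*((b-a)/(2*real k))" using assms by (intro mult_right_mono) auto
    then show ?thesis using k by simp
  qed
  ultimately show "x \<in> {a..b}" using i by auto
qed

lemma II_ub:
  assumes "finite B" "B \<noteq> {}" "a \<le> b" "\<And>x. x \<in> {a..b} \<Longrightarrow> hm B x \<le> f x" "f integrable_on {a..b}"
  shows "II a b B \<le> integral {a..b} f"
  unfolding II_def using assms hm_integrable by (intro integral_le) auto

lemma Q_step:
  assumes "k \<ge> 1"
  shows "Q a b (Suc k) = insert (a + (2*real k + 1)*((b-a)/(2*real (Suc k)))) (Q a (a + real k*(b-a)/real (Suc k)) k)"
proof -
  have h1: "(a + real k*(b-a)/real (Suc k)) - a = real k*(b-a)/real (Suc k)" by simp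
  have kp: "real k > 0" using assms by simp
  have h0: "real k*L/real (Suc k)/(2*real k) = L/(2*real (Suc k))" for L
  proof -
    have "real k*L/real (Suc k)/(2*real k) = (real k * L)/(real k * (2*real (Suc k)))"
      by (simp add: divide_divide_eq_left mult.commute mult.left_commute)
    also have "\<dots> = L/(2*real (Suc k))" using kp by (intro nonzero_mult_divide_mult_cancel_left) simp
    finally show ?thesis .
  qed
  have h2: "real k*(b-a)/real (Suc k)/(2*real k) = (b-a)/(2*real (Suc k))" by (rule h0)
  have h: "((a + real k*(b-a)/real (Suc k)) - a)/(2*real k) = (b-a)/(2*real (Suc k))"
    unfolding h1 h2 ..
  have "Q a (a + real k*(b-a)/real (Suc k)) k = (\<lambda>i. a + (2*real i + 1)*((b-a)/(2*real (Suc k)))) ` {..<k}"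
    unfolding Q_def h ..
  moreover have "{..<Suc k} = insert k {..<k}" by auto
  ultimately show ?thesis unfolding Q_def by simp
qed

lemma Q_ub_aux: "k \<ge> 1 \<Longrightarrow> a \<le> b \<Longrightarrow> II a b (Q a b k) \<le> (b-a)^3/(12*(real k)\<^sup>2)"
proof (induction k arbitrary: b rule: nat_induct_at_least)
  case base
  have "Q a b 1 = {a + (b-a)/2}" unfolding Q_def by (simp add: lessThan_Suc)
  then have "II a b (Q a b 1) = ((b-(a + (b-a)/2))^3 - (a-(a + (b-a)/2))^3)/3"
    using base II_single by simp
  also have "\<dots> = (b-a)^3/12" by (simp add: field_simps power3_eq_cube)
  finally show ?case by simp
next
  case (Suc k)
  let ?L = "b - a"
  let ?b' = "a + real k*(b-a)/real (Suc k)"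
  let ?t = "a + (2*real k + 1)*((b-a)/(2*real (Suc k)))"
  have kpos: "real k \<ge> 1" using Suc by simp
  have b'1: "a \<le> ?b'" using Suc by simp
  have b'2: "?b' \<le> b"
  proof -
    have "real k * (b-a) \<le> real (Suc k) * (b-a)" using Suc by (intro mult_right_mono) auto
    then have "real k*(b-a)/real (Suc k) \<le> b - a" by (subst pos_divide_le_eq) (auto simp: mult.commute)
    then show ?thesis by simp
  qed
  have S: "Q a b (Suc k) = insert ?t (Q a ?b' k)" using Q_step[OF Suc(1)] .
  have fS: "finite (insert ?t (Q a ?b' k))" "insert ?t (Q a ?b' k) \<noteq> {}" by (auto simp: Q_finite)
  have fQ: "finite (Q a ?b' k)" "Q a ?b' k \<noteq> {}" using Q_finite Q_ne Suc by auto
  have "II a b (Q a b (Suc k)) = II a ?b' (insert ?t (Q a ?b' k)) + II ?b' b (insert ?t (Q a ?b' k))"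
    unfolding S by (rule II_combine[OF fS b'1 b'2])
  also have "II a ?b' (insert ?t (Q a ?b' k)) \<le> II a ?b' (Q a ?b' k)"
    unfolding II_def using hm_integrable[OF fS] hm_integrable[OF fQ] hm_mono[OF fS(1) subset_insertI fQ(2)]
    by (intro integral_le) auto
  also have "II ?b' b (insert ?t (Q a ?b' k)) \<le> integral {?b'..b} (\<lambda>x. (x-?t)\<^sup>2)"
    using fS b'2 by (intro II_ub) (auto intro!: hm_le integrable_continuous_interval continuous_intros)
  also have "integral {?b'..b} (\<lambda>x. (x-?t)\<^sup>2) = ((b-?t)^3 - (?b'-?t)^3)/3" using sq_integral b'2 by simp
  also have "II a ?b' (Q a ?b' k) \<le> (?b'-a)^3/(12*(real k)\<^sup>2)" by (rule Suc.IH[OF b'1])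
  also have "(?b'-a)^3/(12*(real k)\<^sup>2) + ((b-?t)^3 - (?b'-?t)^3)/3 = (b-a)^3/(12*(real (Suc k))\<^sup>2)"
  proof -
    have g1: "L - (2*K+1)*(L/(2*(K+1))) = L/(2*(K+1))" if "K \<ge> 0" for K L :: real
      using that by (simp add: field_simps)
    have g2': "K*L/(K+1) - (2*K+1)*(L/(2*(K+1))) + L/(2*(K+1)) = 0" if "K \<ge> 0" for K L :: real
    proof -
      have nz: "K + 1 \<noteq> 0" "2*(K+1) \<noteq> 0" using that by auto
      have x1: "2*(K+1)*(K*L/(K+1)) = 2*K*L" using nz by (simp add: field_simps)
      have x2: "2*(K+1)*((2*K+1)*(L/(2*(K+1)))) = (2*K+1)*L" using nz by simp
      have x3: "2*(K+1)*(L/(2*(K+1))) = L" using nz by simp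
      have "2*(K+1)*(K*L/(K+1) - (2*K+1)*(L/(2*(K+1))) + L/(2*(K+1))) = 2*K*L - (2*K+1)*L + L"
      proof -
        have dd: "D*(A - B + C) = D*A - D*B + D*C" for D A B C :: real by (simp add: algebra_simps)
        show ?thesis unfolding dd[of "2*(K+1)"] x1 x2 x3 ..
      qed
      also have "\<dots> = 0" by (simp add: algebra_simps)
      finally show ?thesis using nz by simp
    qed
    have g2: "K*L/(K+1) - (2*K+1)*(L/(2*(K+1))) = -(L/(2*(K+1)))" if "K \<ge> 0" for K L :: real
      using g2'[OF that, of L] by linarith
    have g3: "(K*L/M)^3/(12*K\<^sup>2) + ((L/(2*M))^3 - (-(L/(2*M)))^3)/3 = L^3/(12*M\<^sup>2)"
      if "K > 0" "M = K + 1" for K M L :: real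
    proof -
      have nz: "K \<noteq> 0" "M \<noteq> 0" using that by auto
      have t1: "(K*L/M)^3/(12*K\<^sup>2) = K*L^3/(12*M^3)" using nz by (simp add: field_simps power3_eq_cube power2_eq_square)
      have t2: "((L/(2*M))^3 - (-(L/(2*M)))^3)/3 = L^3/(12*M^3)" using nz by (simp add: field_simps power3_eq_cube)
      have t3: "K*L^3/(12*M^3) + L^3/(12*M^3) = M*L^3/(12*M^3)" using that by (simp add: field_simps)
      have t4: "M*L^3/(12*M^3) = L^3/(12*M\<^sup>2)" using nz by (simp add: field_simps power3_eq_cube power2_eq_square)
      show ?thesis unfolding t1 t2 t3 t4 ..
    qed
    have rs: "real (Suc k) = real k + 1" by simp
    have e1: "b - ?t = (b-a)/(2*(real k+1))"
    proof -
      have "b - ?t = (b-a) - (2*real k+1)*((b-a)/(2*(real k + 1)))" unfolding rs by (simp add: algebra_simps)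
      also have "\<dots> = (b-a)/(2*(real k+1))" by (rule g1) simp
      finally show ?thesis .
    qed
    have e2: "?b' - ?t = -((b-a)/(2*(real k+1)))"
    proof -
      have "?b' - ?t = real k*(b-a)/(real k+1) - (2*real k+1)*((b-a)/(2*(real k + 1)))" unfolding rs by (simp add: algebra_simps)
      also have "\<dots> = -((b-a)/(2*(real k+1)))" by (rule g2) simp
      finally show ?thesis .
    qed
    have e3: "?b' - a = real k*(b-a)/(real k+1)" by simp
    show ?thesis unfolding e1 e2 e3 unfolding rs using g3[of "real k" "real k + 1" "b-a"] kpos by simp
  qed
  finally show ?case by simp
qed


lemma dens_meas[measurable]: "(\<lambda>x. ennreal (dens x)) \<in> borel_measurable lborel"
  unfolding dens_def J1_def J2_def J3_def by measurable

lemma dens_nonneg: "0 \<le> dens x" unfolding dens_def by auto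

lemma hm_meas: "finite B \<Longrightarrow> B \<noteq> {} \<Longrightarrow> (\<lambda>x. ennreal (hm B x)) \<in> borel_measurable lborel"
  using borel_measurable_continuous_onI[OF hm_cont] by auto

lemma nn_hasint:
  fixes f :: "real \<Rightarrow> real"
  assumes "\<And>x. 0 \<le> f x" "(f has_integral I) UNIV"
  shows "(\<integral>\<^sup>+x. ennreal (f x) \<partial>lborel) = ennreal I"
  using nn_integral_has_integral_lebesgue[of UNIV f I] assms by simp

lemma P_nn: "g \<in> borel_measurable lborel \<Longrightarrow> (\<integral>\<^sup>+x. g x \<partial>P) = (\<integral>\<^sup>+x. ennreal (dens x) * g x \<partial>lborel)"
  unfolding P_def by (rule nn_integral_density) auto

lemma piece_hasint:
  assumes "finite B" "B \<noteq> {}"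
  shows "((\<lambda>x. if x \<in> {a..b} then c * hm B x else 0) has_integral (c * II a b B)) UNIV"
proof -
  have "((\<lambda>x. c * hm B x) has_integral (c * II a b B)) {a..b}"
    unfolding II_def using hm_integrable[OF assms] by (intro has_integral_mult_right integrable_integral)
  then show ?thesis by (subst has_integral_restrict_UNIV)
qed

lemma hm_def2: "Min ((\<lambda>a. (x - a)\<^sup>2) ` B) = hm B x" unfolding hm_def ..

lemma dist_err_gen:
  assumes "finite B" "B \<noteq> {}" "\<And>x. x \<in> {a..b} \<Longrightarrow> dens x = c" "0 \<le> c"
  shows "dist_err P B {a..b} = ennreal (c * II a b B)"
proof -
  have m: "(\<lambda>x. ennreal (hm B x) * indicator {a..b} x) \<in> borel_measurable lborel"
    using hm_meas[OF assms(1,2)] by measurable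
  have "dist_err P B {a..b} = (\<integral>\<^sup>+x. ennreal (dens x) * (ennreal (hm B x) * indicator {a..b} x) \<partial>lborel)"
    unfolding dist_err_def hm_def2 by (rule P_nn[OF m])
  also have "\<dots> = (\<integral>\<^sup>+x. ennreal (if x \<in> {a..b} then c * hm B x else 0) \<partial>lborel)"
    using assms by (intro nn_integral_cong) (auto simp: ennreal_mult'' hm_nonneg indicator_def)
  also have "\<dots> = ennreal (c * II a b B)"
    using piece_hasint[OF assms(1,2)] assms hm_nonneg by (intro nn_hasint) auto
  finally show ?thesis .
qed

lemma emeasure_P_gen:
  assumes "a \<le> b" "\<And>x. x \<in> {a..b} \<Longrightarrow> dens x = c" "0 \<le> c"
  shows "emeasure P {a..b} = ennreal (c * (b - a))"
proof -
  have "emeasure P {a..b} = (\<integral>\<^sup>+x. ennreal (dens x) * indicator {a..b} x \<partial>lborel)"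
    unfolding P_def by (rule emeasure_density) auto
  also have "\<dots> = (\<integral>\<^sup>+x. ennreal (if x \<in> {a..b} then c else 0) \<partial>lborel)"
    using assms by (intro nn_integral_cong) (auto simp: indicator_def)
  also have "\<dots> = ennreal (c * (b - a))"
  proof (rule nn_hasint)
    have "((\<lambda>x. c) has_integral (c * (b - a))) {a..b}" using has_integral_const_real[of c a b] assms by (simp add: mult.commute)
    then show "((\<lambda>x. if x \<in> {a..b} then c else 0) has_integral (c * (b - a))) UNIV"
      by (subst has_integral_restrict_UNIV)
  qed (use assms in auto)
  finally show ?thesis .
qed

lemma cond_gen:
  assumes "finite B" "B \<noteq> {}" "a < b" "\<And>x. x \<in> {a..b} \<Longrightarrow> dens x = c" "0 < c"
  shows "quant_err (cond_measure P {a..b}) B = ennreal (II a b B / (b - a))"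
proof -
  have m: "(\<lambda>x. ennreal (hm B x)) \<in> borel_measurable P" unfolding P_def using hm_meas[OF assms(1,2)] by simp
  have s: "{a..b} \<in> sets P" unfolding P_def by simp
  have "quant_err (cond_measure P {a..b}) B = (\<integral>\<^sup>+x. ennreal (hm B x) * indicator {a..b} x \<partial>P) / emeasure P {a..b}"
    unfolding quant_err_def hm_def2 by (rule nn_integral_uniform_measure[OF m s])
  also have "\<dots> = ennreal (c * II a b B) / ennreal (c * (b - a))"
    using dist_err_gen[OF assms(1,2) assms(4)] emeasure_P_gen[of a b c] assms
    unfolding dist_err_def hm_def2 by simp
  also have "\<dots> = ennreal (II a b B / (b - a))"
    using assms II_nonneg[OF assms(1,2)] by (subst divide_ennreal) auto
  finally show ?thesis .
qed

definition Etot :: "real set \<Rightarrow> real" where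
  "Etot B = 3/2 * II 0 (1/3) B + 9/4 * II (2/3) (7/9) B + 9/4 * II (8/9) 1 B"

lemma quant_err_P:
  assumes "finite B" "B \<noteq> {}"
  shows "quant_err P B = ennreal (Etot B)"
proof -
  have "quant_err P B = (\<integral>\<^sup>+x. ennreal (dens x) * ennreal (hm B x) \<partial>lborel)"
    unfolding quant_err_def hm_def2 by (rule P_nn[OF hm_meas[OF assms]])
  also have "\<dots> = (\<integral>\<^sup>+x. ennreal ((if x \<in> {0..1/3} then 3/2 * hm B x else 0)
      + (if x \<in> {2/3..7/9} then 9/4 * hm B x else 0) + (if x \<in> {8/9..1} then 9/4 * hm B x else 0)) \<partial>lborel)"
    by (intro nn_integral_cong) (auto simp: ennreal_mult[symmetric] hm_nonneg[OF assms] dens_def J1_def J2_def J3_def)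
  also have "\<dots> = ennreal (Etot B)"
    unfolding Etot_def using hm_nonneg[OF assms]
    by (intro nn_hasint has_integral_add piece_hasint assms) auto
  finally show ?thesis .
qed


definition N1 :: "real set \<Rightarrow> real set" where "N1 B = {t\<in>B. t < 1/2}"
definition N2 :: "real set \<Rightarrow> real set" where "N2 B = {t\<in>B. 1/2 \<le> t \<and> t \<le> 5/6}"
definition N3 :: "real set \<Rightarrow> real set" where "N3 B = {t\<in>B. 5/6 < t}"

definition gg :: "nat \<Rightarrow> nat \<Rightarrow> nat \<Rightarrow> real" where
  "gg m1 m2 m3 = 1/216 * (1 / (real m1)\<^sup>2) + 1/3888 * (1 / (real m2)\<^sup>2 + 1 / (real m3)\<^sup>2)"

lemma sqle: "\<bar>x - p\<bar> \<le> \<bar>x - t\<bar> \<Longrightarrow> (x-p)\<^sup>2 \<le> (x-t)\<^sup>2" for x p t :: real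
  by (simp add: abs_le_square_iff)

lemma PB:
  assumes "a \<le> b" "finite B" "B \<noteq> {}" "\<And>x t. x \<in> {a..b} \<Longrightarrow> t \<in> B \<Longrightarrow> (x-p)\<^sup>2 \<le> (x-t)\<^sup>2"
  shows "((b-p)^3 - (a-p)^3)/3 \<le> II a b B"
proof -
  have "integral {a..b} (\<lambda>x. (x-p)\<^sup>2) \<le> II a b B"
    unfolding II_def using assms hm_integrable
    by (intro integral_le hm_ge) (auto intro!: integrable_continuous_interval continuous_intros)
  then show ?thesis using sq_integral[OF assms(1)] by simp
qed

lemma LB1:
  assumes "finite B" "N1 B \<noteq> {}"
  shows "1/216 * (1 / (real (card (N1 B)))\<^sup>2) \<le> 3/2 * II 0 (1/3) B"
    and "(\<exists>s\<in>N1 B. s \<notin> J1) \<Longrightarrow> 1/216 * (1 / (real (card (N1 B)))\<^sup>2) < 3/2 * II 0 (1/3) B"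
proof -
  have c: "N1 B \<subseteq> B" "(0::real) < 1/3" "(0::real) < 1/6" "1/3 - 0 \<le> 2*(1/6::real)"
     "\<forall>t\<in>B-N1 B. t \<le> 0 - 1/6 \<or> 1/3 + 1/6 \<le> t"
     "\<forall>s\<in>N1 B. \<forall>t\<in>B-N1 B. (t \<le> 0 - 1/6 \<longrightarrow> t < s) \<and> (1/3 + 1/6 \<le> t \<longrightarrow> s < t)"
    unfolding N1_def by auto
  have e: "1/216 * (1 / (real (card (N1 B)))\<^sup>2) = 3/2 * ((1/3 - 0)^3/(12*(real (card (N1 B)))\<^sup>2))"
    by (simp add: field_simps)
  show "1/216 * (1 / (real (card (N1 B)))\<^sup>2) \<le> 3/2 * II 0 (1/3) B"
    unfolding e using M_bound(1)[OF assms(1) c(1) assms(2) c(2-6)] by simp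
  assume "\<exists>s\<in>N1 B. s \<notin> J1"
  then obtain s where "s \<in> N1 B" "s \<notin> J1" by blast
  then have "\<exists>s\<in>N1 B. s < 0 \<or> 1/3 < s" unfolding J1_def by (intro bexI[of _ s]) auto
  then show "1/216 * (1 / (real (card (N1 B)))\<^sup>2) < 3/2 * II 0 (1/3) B"
    unfolding e using M_bound(2)[OF assms(1) c(1) assms(2) c(2-6)] by simp
qed

lemma LB2:
  assumes "finite B" "N2 B \<noteq> {}"
  shows "1/3888 * (1 / (real (card (N2 B)))\<^sup>2) \<le> 9/4 * II (2/3) (7/9) B"
    and "(\<exists>s\<in>N2 B. s \<notin> J2) \<Longrightarrow> 1/3888 * (1 / (real (card (N2 B)))\<^sup>2) < 9/4 * II (2/3) (7/9) B"
proof -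
  have c: "N2 B \<subseteq> B" "(2/3::real) < 7/9" "(0::real) < 1/18" "7/9 - 2/3 \<le> 2*(1/18::real)"
     "\<forall>t\<in>B-N2 B. t \<le> 2/3 - 1/18 \<or> 7/9 + 1/18 \<le> t"
     "\<forall>s\<in>N2 B. \<forall>t\<in>B-N2 B. (t \<le> 2/3 - 1/18 \<longrightarrow> t < s) \<and> (7/9 + 1/18 \<le> t \<longrightarrow> s < t)"
    unfolding N2_def by auto
  have e: "1/3888 * (1 / (real (card (N2 B)))\<^sup>2) = 9/4 * ((7/9 - 2/3)^3/(12*(real (card (N2 B)))\<^sup>2))"
    by (simp add: field_simps)
  show "1/3888 * (1 / (real (card (N2 B)))\<^sup>2) \<le> 9/4 * II (2/3) (7/9) B"
    unfolding e using M_bound(1)[OF assms(1) c(1) assms(2) c(2-6)] by simp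
  assume "\<exists>s\<in>N2 B. s \<notin> J2"
  then obtain s where "s \<in> N2 B" "s \<notin> J2" by blast
  then have "\<exists>s\<in>N2 B. s < 2/3 \<or> 7/9 < s" unfolding J2_def by (intro bexI[of _ s]) auto
  then show "1/3888 * (1 / (real (card (N2 B)))\<^sup>2) < 9/4 * II (2/3) (7/9) B"
    unfolding e using M_bound(2)[OF assms(1) c(1) assms(2) c(2-6)] by simp
qed

lemma LB3:
  assumes "finite B" "N3 B \<noteq> {}"
  shows "1/3888 * (1 / (real (card (N3 B)))\<^sup>2) \<le> 9/4 * II (8/9) 1 B"
    and "(\<exists>s\<in>N3 B. s \<notin> J3) \<Longrightarrow> 1/3888 * (1 / (real (card (N3 B)))\<^sup>2) < 9/4 * II (8/9) 1 B"
proof -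
  have c: "N3 B \<subseteq> B" "(8/9::real) < 1" "(0::real) < 1/18" "1 - 8/9 \<le> 2*(1/18::real)"
     "\<forall>t\<in>B-N3 B. t \<le> 8/9 - 1/18 \<or> 1 + 1/18 \<le> t"
     "\<forall>s\<in>N3 B. \<forall>t\<in>B-N3 B. (t \<le> 8/9 - 1/18 \<longrightarrow> t < s) \<and> (1 + 1/18 \<le> t \<longrightarrow> s < t)"
    unfolding N3_def by auto
  have e: "1/3888 * (1 / (real (card (N3 B)))\<^sup>2) = 9/4 * ((1 - 8/9)^3/(12*(real (card (N3 B)))\<^sup>2))"
    by (simp add: field_simps)
  show "1/3888 * (1 / (real (card (N3 B)))\<^sup>2) \<le> 9/4 * II (8/9) 1 B"
    unfolding e using M_bound(1)[OF assms(1) c(1) assms(2) c(2-6)] by simp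
  assume "\<exists>s\<in>N3 B. s \<notin> J3"
  then obtain s where "s \<in> N3 B" "s \<notin> J3" by blast
  then have "\<exists>s\<in>N3 B. s < 8/9 \<or> 1 < s" unfolding J3_def by (intro bexI[of _ s]) auto
  then show "1/3888 * (1 / (real (card (N3 B)))\<^sup>2) < 9/4 * II (8/9) 1 B"
    unfolding e using M_bound(2)[OF assms(1) c(1) assms(2) c(2-6)] by simp
qed

lemma EB1:
  assumes "finite B" "B \<noteq> {}" "N1 B = {}"
  shows "13/216 \<le> 3/2 * II 0 (1/3) B"
proof -
  have "((1/3-1/2)^3 - (0-1/2)^3)/3 \<le> II 0 (1/3) B"
  proof (rule PB[OF _ assms(1,2)])
    fix x t assume x: "x \<in> {0..(1/3::real)}" and t: "t \<in> B"
    then have "1/2 \<le> t" using assms(3) unfolding N1_def by auto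
    then show "(x - 1/2)\<^sup>2 \<le> (x-t)\<^sup>2" using x by (intro sqle) auto
  qed simp
  moreover have "((1/3-1/2)^3 - (0-1/2)^3)/3 = (13/324::real)" by (simp add: power_divide)
  ultimately show ?thesis by linarith
qed

lemma EB2:
  assumes "finite B" "B \<noteq> {}" "N2 B = {}"
  shows "13/3888 \<le> 9/4 * II (2/3) (7/9) B"
proof -
  have "((7/9-5/6)^3 - (2/3-5/6)^3)/3 \<le> II (2/3) (7/9) B"
  proof (rule PB[OF _ assms(1,2)])
    fix x t assume x: "x \<in> {2/3..(7/9::real)}" and t: "t \<in> B"
    have "t \<notin> N2 B" using assms(3) by auto
    then have "\<not> (1/2 \<le> t \<and> t \<le> 5/6)" using t unfolding N2_def by auto
    then have "t < 1/2 \<or> 5/6 < t" by linarith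
    then show "(x - 5/6)\<^sup>2 \<le> (x-t)\<^sup>2" using x by (intro sqle) auto
  qed simp
  moreover have "((7/9-5/6)^3 - (2/3-5/6)^3)/3 = (13/8748::real)" by (simp add: power_divide)
  ultimately show ?thesis by linarith
qed

lemma EB3:
  assumes "finite B" "B \<noteq> {}" "N3 B = {}"
  shows "13/3888 \<le> 9/4 * II (8/9) 1 B"
proof -
  have "((1-5/6)^3 - (8/9-5/6)^3)/3 \<le> II (8/9) 1 B"
  proof (rule PB[OF _ assms(1,2)])
    fix x t assume x: "x \<in> {8/9..(1::real)}" and t: "t \<in> B"
    then have "t \<le> 5/6" using assms(3) unfolding N3_def by auto
    then show "(x - 5/6)\<^sup>2 \<le> (x-t)\<^sup>2" using x by (intro sqle) auto
  qed simp
  moreover have "((1-5/6)^3 - (8/9-5/6)^3)/3 = (13/8748::real)" by (simp add: power_divide)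
  ultimately show ?thesis by linarith
qed


lemma II_sub: "finite B \<Longrightarrow> B' \<subseteq> B \<Longrightarrow> B' \<noteq> {} \<Longrightarrow> II a b B \<le> II a b B'"
  unfolding II_def
  by (intro integral_le hm_integrable) (auto intro: finite_subset hm_mono)

lemma Q_ub: "k \<ge> 1 \<Longrightarrow> a \<le> b \<Longrightarrow> finite B \<Longrightarrow> Q a b k \<subseteq> B \<Longrightarrow> II a b B \<le> (b-a)^3/(12*(real k)\<^sup>2)"
  using II_sub[of B "Q a b k" a b] Q_ne Q_ub_aux by fastforce

lemma Etot_nonneg_parts:
  assumes "finite B" "B \<noteq> {}"
  shows "0 \<le> II 0 (1/3) B" "0 \<le> II (2/3) (7/9) B" "0 \<le> II (8/9) 1 B"
  using II_nonneg[OF assms] by auto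

lemma UB:
  assumes "m1 \<ge> 1" "m2 \<ge> 1" "m3 \<ge> 1" "m1 + m2 + m3 \<le> n"
  shows "Vn P n \<le> ennreal (gg m1 m2 m3)"
proof -
  let ?Q1 = "Q 0 (1/3) m1" and ?Q2 = "Q (2/3) (7/9) m2" and ?Q3 = "Q (8/9) 1 m3"
  let ?B = "?Q1 \<union> ?Q2 \<union> ?Q3"
  have s1: "?Q1 \<subseteq> {0..1/3}" and s2: "?Q2 \<subseteq> {2/3..7/9}" and s3: "?Q3 \<subseteq> {8/9..1}"
    by (auto intro!: Q_sub)
  have fin: "finite ?B" by (simp add: Q_finite)
  have ne: "?B \<noteq> {}" using Q_ne assms by auto
  have d12: "?Q1 \<inter> ?Q2 = {}" using s1 s2 by fastforce
  have d3: "(?Q1 \<union> ?Q2) \<inter> ?Q3 = {}" using s1 s2 s3 by fastforce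
  have "card ?B = m1 + m2 + m3"
    using d12 d3 by (simp add: card_Un_disjoint Q_finite Q_card)
  then have cb: "?B \<in> codebooks n" using fin ne assms unfolding codebooks_def by auto
  have "Vn P n \<le> quant_err P ?B" unfolding Vn_def using cb by (rule INF_lower)
  also have "\<dots> = ennreal (Etot ?B)" by (rule quant_err_P[OF fin ne])
  also have "Etot ?B \<le> gg m1 m2 m3"
  proof -
    have "II 0 (1/3) ?B \<le> (1/3 - 0)^3/(12*(real m1)\<^sup>2)" using assms fin by (intro Q_ub) auto
    moreover have "II (2/3) (7/9) ?B \<le> (7/9 - 2/3)^3/(12*(real m2)\<^sup>2)" using assms fin by (intro Q_ub) auto
    moreover have "II (8/9) 1 ?B \<le> (1 - 8/9)^3/(12*(real m3)\<^sup>2)" using assms fin by (intro Q_ub) auto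
    moreover have "gg m1 m2 m3 = 3/2 * ((1/3 - 0)^3/(12*(real m1)\<^sup>2)) + 9/4 * ((7/9 - 2/3)^3/(12*(real m2)\<^sup>2))
       + 9/4 * ((1 - 8/9)^3/(12*(real m3)\<^sup>2))"
      unfolding gg_def by (simp add: field_simps)
    ultimately show ?thesis unfolding Etot_def by linarith
  qed
  then have "ennreal (Etot ?B) \<le> ennreal (gg m1 m2 m3)" by (rule ennreal_leI)
  finally show ?thesis .
qed

lemma partition3:
  "B = N1 B \<union> N2 B \<union> N3 B" "N1 B \<inter> N2 B = {}" "(N1 B \<union> N2 B) \<inter> N3 B = {}"
  unfolding N1_def N2_def N3_def by auto

lemma card3: "finite B \<Longrightarrow> card B = card (N1 B) + card (N2 B) + card (N3 B)"
  using partition3[of B] card_Un_disjoint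
  by (metis (no_types, lifting) finite_Un)

lemma gg_lb:
  assumes "finite B" "N1 B \<noteq> {}" "N2 B \<noteq> {}" "N3 B \<noteq> {}"
  shows "gg (card (N1 B)) (card (N2 B)) (card (N3 B)) \<le> Etot B"
    and "(\<exists>s\<in>N1 B. s \<notin> J1) \<or> (\<exists>s\<in>N2 B. s \<notin> J2) \<or> (\<exists>s\<in>N3 B. s \<notin> J3) \<Longrightarrow>
         gg (card (N1 B)) (card (N2 B)) (card (N3 B)) < Etot B"
proof -
  note l1 = LB1[OF assms(1,2)] and l2 = LB2[OF assms(1,3)] and l3 = LB3[OF assms(1,4)]
  show "gg (card (N1 B)) (card (N2 B)) (card (N3 B)) \<le> Etot B"
    unfolding gg_def Etot_def distrib_left using l1(1) l2(1) l3(1) by linarith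
  assume A: "(\<exists>s\<in>N1 B. s \<notin> J1) \<or> (\<exists>s\<in>N2 B. s \<notin> J2) \<or> (\<exists>s\<in>N3 B. s \<notin> J3)"
  have D: "1/216 * (1 / (real (card (N1 B)))\<^sup>2) < 3/2 * II 0 (1/3) B
      \<or> 1/3888 * (1 / (real (card (N2 B)))\<^sup>2) < 9/4 * II (2/3) (7/9) B
      \<or> 1/3888 * (1 / (real (card (N3 B)))\<^sup>2) < 9/4 * II (8/9) 1 B"
    using A l1(2) l2(2) l3(2) by blast
  show "gg (card (N1 B)) (card (N2 B)) (card (N3 B)) < Etot B"
    unfolding gg_def Etot_def distrib_left using D l1(1) l2(1) l3(1) by (elim disjE; linarith)
qed


lemma N_mem: "u \<in> N1 B \<Longrightarrow> u \<in> B \<and> u < 1/2" "u \<in> N2 B \<Longrightarrow> u \<in> B \<and> 1/2 \<le> u \<and> u \<le> 5/6"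
  "u \<in> N3 B \<Longrightarrow> u \<in> B \<and> 5/6 < u"
  unfolding N1_def N2_def N3_def by auto

lemma N_cases: "u \<in> B \<Longrightarrow> u \<in> N1 B \<or> u \<in> N2 B \<or> u \<in> N3 B"
  unfolding N1_def N2_def N3_def by auto

lemma II_right:
  assumes "finite B" "B \<noteq> {}" "a \<le> c" "c \<le> b"
  shows "II c b B \<le> II a b B"
  using II_combine[OF assms(1,2,3,4)] II_nonneg[OF assms(1,2), of a c] by linarith

lemma S1:
  assumes "finite B" "card (N1 B) = 2" "N2 B = {}" "N3 B = {t}"
  shows "20/3888 < Etot B"
proof -
  have ne: "B \<noteq> {}" using assms(4) unfolding N3_def by auto
  have N1ne: "N1 B \<noteq> {}" using assms(2) by auto
  have e1: "1/864 \<le> 3/2 * II 0 (1/3) B" using LB1(1)[OF assms(1) N1ne] assms(2) by simp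
  have mem: "\<And>u. u \<in> B \<Longrightarrow> u < 1/2 \<or> u = t"
    using N_cases assms(3,4) N_mem by blast
  have t: "5/6 < t" using N_mem(3)[of t B] assms(4) by auto
  have nn: "0 \<le> II 0 (1/3) B" "0 \<le> II (2/3) (7/9) B" "0 \<le> II (8/9) 1 B"
    using Etot_nonneg_parts[OF assms(1) ne] by auto
  show ?thesis
  proof (cases "t < 8/9")
    case True
    have "((1-8/9)^3 - (8/9-8/9)^3)/3 \<le> II (8/9) 1 B"
    proof (rule PB[OF _ assms(1) ne])
      fix x u assume x: "x \<in> {8/9..(1::real)}" and u: "u \<in> B"
      then have "u < 8/9" using mem[OF u] True by auto
      then show "(x - 8/9)\<^sup>2 \<le> (x-u)\<^sup>2" using x by (intro sqle) auto
    qed simp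
    moreover have "((1-8/9)^3 - (8/9-8/9)^3)/3 = (1/2187::real)" by (simp add: power_divide)
    moreover have "13/3888 \<le> 9/4 * II (2/3) (7/9) B" by (rule EB2[OF assms(1) ne assms(3)])
    ultimately show ?thesis using e1 unfolding Etot_def by linarith
  next
    case False
    have "((7/9-8/9)^3 - (25/36-8/9)^3)/3 \<le> II (25/36) (7/9) B"
    proof (rule PB[OF _ assms(1) ne])
      fix x u assume x: "x \<in> {25/36..(7/9::real)}" and u: "u \<in> B"
      show "(x - 8/9)\<^sup>2 \<le> (x-u)\<^sup>2"
      proof (cases "u = t")
        case True then show ?thesis using x False by (intro sqle) auto
      next
        case F: False then have "u < 1/2" using mem[OF u] by auto
        then show ?thesis using x by (intro sqle) auto
      qed
    qed simp
    moreover have "((7/9-8/9)^3 - (25/36-8/9)^3)/3 = (279/139968::real)" by (simp add: power_divide)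
    moreover have "II (25/36) (7/9) B \<le> II (2/3) (7/9) B" by (rule II_right[OF assms(1) ne]) auto
    ultimately show ?thesis using e1 nn unfolding Etot_def by linarith
  qed
qed

lemma S2:
  assumes "finite B" "card (N1 B) = 2" "N3 B = {}" "N2 B = {s}"
  shows "20/3888 < Etot B"
proof -
  have ne: "B \<noteq> {}" using assms(4) unfolding N2_def by auto
  have N1ne: "N1 B \<noteq> {}" using assms(2) by auto
  have e1: "1/864 \<le> 3/2 * II 0 (1/3) B" using LB1(1)[OF assms(1) N1ne] assms(2) by simp
  have mem: "\<And>u. u \<in> B \<Longrightarrow> u < 1/2 \<or> u = s"
    using N_cases assms(3,4) N_mem by blast
  have nn: "0 \<le> II 0 (1/3) B" "0 \<le> II (2/3) (7/9) B" "0 \<le> II (8/9) 1 B"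
    using Etot_nonneg_parts[OF assms(1) ne] by auto
  show ?thesis
  proof (cases "s \<le> 7/9")
    case True
    have "((1-7/9)^3 - (8/9-7/9)^3)/3 \<le> II (8/9) 1 B"
    proof (rule PB[OF _ assms(1) ne])
      fix x u assume x: "x \<in> {8/9..(1::real)}" and u: "u \<in> B"
      then have "u \<le> 7/9" using mem[OF u] True by auto
      then show "(x - 7/9)\<^sup>2 \<le> (x-u)\<^sup>2" using x by (intro sqle) auto
    qed simp
    moreover have "((1-7/9)^3 - (8/9-7/9)^3)/3 = (7/2187::real)" by (simp add: power_divide)
    ultimately show ?thesis using e1 nn unfolding Etot_def by linarith
  next
    case False
    have "((7/9-7/9)^3 - (2/3-7/9)^3)/3 \<le> II (2/3) (7/9) B"
    proof (rule PB[OF _ assms(1) ne])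
      fix x u assume x: "x \<in> {2/3..(7/9::real)}" and u: "u \<in> B"
      show "(x - 7/9)\<^sup>2 \<le> (x-u)\<^sup>2"
      proof (cases "u = s")
        case True then show ?thesis using x False by (intro sqle) auto
      next
        case F: False then have "u < 1/2" using mem[OF u] by auto
        then show ?thesis using x by (intro sqle) auto
      qed
    qed simp
    moreover have "((7/9-7/9)^3 - (2/3-7/9)^3)/3 = (1/2187::real)" by (simp add: power_divide)
    moreover have "13/3888 \<le> 9/4 * II (8/9) 1 B" by (rule EB3[OF assms(1) ne assms(3)])
    ultimately show ?thesis using e1 nn unfolding Etot_def by linarith
  qed
qed


lemma step1:
  assumes fin: "finite B" and ne: "B \<noteq> {}" and cB: "card B \<le> n" and n3: "n \<ge> 3"
    and ub: "\<And>m1 m2 m3. m1 \<ge> 1 \<Longrightarrow> m2 \<ge> 1 \<Longrightarrow> m3 \<ge> 1 \<Longrightarrow> m1+m2+m3 \<le> n \<Longrightarrow> Etot B \<le> gg m1 m2 m3"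
  shows "N1 B \<noteq> {} \<and> N2 B \<noteq> {} \<and> N3 B \<noteq> {}"
proof (rule ccontr)
  assume A: "\<not> (N1 B \<noteq> {} \<and> N2 B \<noteq> {} \<and> N3 B \<noteq> {})"
  have nn: "0 \<le> II 0 (1/3) B" "0 \<le> II (2/3) (7/9) B" "0 \<le> II (8/9) 1 B"
    using Etot_nonneg_parts[OF fin ne] by auto
  have emp: "13/3888 \<le> Etot B"
  proof -
    have "N1 B = {} \<or> N2 B = {} \<or> N3 B = {}" using A by blast
    moreover
    { assume "N1 B = {}" then have "13/216 \<le> 3/2 * II 0 (1/3) B" by (rule EB1[OF fin ne])
      then have ?thesis using nn unfolding Etot_def by linarith }
    moreover
    { assume "N2 B = {}" then have "13/3888 \<le> 9/4 * II (2/3) (7/9) B" by (rule EB2[OF fin ne])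
      then have ?thesis using nn unfolding Etot_def by linarith }
    moreover
    { assume "N3 B = {}" then have "13/3888 \<le> 9/4 * II (8/9) 1 B" by (rule EB3[OF fin ne])
      then have ?thesis using nn unfolding Etot_def by linarith }
    ultimately show ?thesis by blast
  qed
  have c3: "card (N1 B) + card (N2 B) + card (N3 B) \<le> n" using card3[OF fin] cB by simp
  show False
  proof (cases "n \<ge> 4")
    case True
    have "Etot B \<le> gg (n-2) 1 1" using True by (intro ub) auto
    moreover have "gg (n-2) 1 1 < 13/3888"
    proof -
      have rn: "real (n-2) = real n - 2" using True by simp
      have "(2::real) \<le> real n - 2" using True by simp
      then have "2\<^sup>2 \<le> (real n - 2)\<^sup>2" by (intro power_mono) auto
      then have "4 \<le> (real n - 2)\<^sup>2" by simp
      then have "1 / (real n - 2)\<^sup>2 \<le> 1/4" by (intro divide_left_mono) auto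
      then show ?thesis unfolding gg_def rn by simp
    qed
    ultimately show False using emp by linarith
  next
    case False
    then have n: "n = 3" using n3 by simp
    have "Etot B \<le> gg 1 1 1" using n by (intro ub) auto
    then have u: "Etot B \<le> 20/3888" by (simp add: gg_def)
    show False
    proof (cases "N1 B = {}")
      case True
      then have "13/216 \<le> 3/2 * II 0 (1/3) B" by (rule EB1[OF fin ne])
      then show False using nn u unfolding Etot_def by linarith
    next
      case N1ne: False
      have l1: "1/216 * (1 / (real (card (N1 B)))\<^sup>2) \<le> 3/2 * II 0 (1/3) B" by (rule LB1(1)[OF fin N1ne])
      have fN1: "finite (N1 B)" using fin unfolding N1_def by auto
      have k1: "card (N1 B) \<ge> 1" using N1ne fN1 by (simp add: Suc_leI card_gt_0_iff)
      show False
      proof (cases "N2 B = {} \<and> N3 B = {}")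
        case True
        then have "13/3888 \<le> 9/4 * II (2/3) (7/9) B" "13/3888 \<le> 9/4 * II (8/9) 1 B"
          using EB2[OF fin ne] EB3[OF fin ne] by auto
        then show False using nn u unfolding Etot_def by linarith
      next
        case F23: False
        show False
        proof (cases "card (N1 B) = 1")
          case True
          then have "1/216 \<le> 3/2 * II 0 (1/3) B" using l1 by simp
          moreover have "13/3888 \<le> 9/4 * II (2/3) (7/9) B + 9/4 * II (8/9) 1 B"
          proof -
            have "N2 B = {} \<or> N3 B = {}" using A N1ne by blast
            then show ?thesis
            proof
              assume "N2 B = {}" then have "13/3888 \<le> 9/4 * II (2/3) (7/9) B" by (rule EB2[OF fin ne])
              then show ?thesis using nn by linarith
            next
              assume "N3 B = {}" then have "13/3888 \<le> 9/4 * II (8/9) 1 B" by (rule EB3[OF fin ne])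
              then show ?thesis using nn by linarith
            qed
          qed
          ultimately show False using u unfolding Etot_def by linarith
        next
          case False
          then have k2: "card (N1 B) \<ge> 2" using k1 by linarith
          have fN2: "finite (N2 B)" "finite (N3 B)" using fin unfolding N2_def N3_def by auto
          show False
          proof (cases "N2 B = {}")
            case True
            then have "N3 B \<noteq> {}" using F23 by auto
            then have "card (N3 B) \<ge> 1" using fN2 by (simp add: Suc_leI card_gt_0_iff)
            then have "card (N3 B) = 1" "card (N1 B) = 2" using c3 k2 n True by auto
            then obtain t where "N3 B = {t}" using card_1_singletonE by blast
            then have "20/3888 < Etot B" by (rule S1[OF fin \<open>card (N1 B) = 2\<close> True])
            then show False using u by linarith
          next
            case N2ne: False
            then have N3e: "N3 B = {}" using A N1ne by auto
            have "card (N2 B) \<ge> 1" using fN2 N2ne by (simp add: Suc_leI card_gt_0_iff)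
            then have "card (N2 B) = 1" "card (N1 B) = 2" using c3 k2 n N3e by auto
            then obtain s where "N2 B = {s}" using card_1_singletonE by blast
            then have "20/3888 < Etot B" by (rule S2[OF fin \<open>card (N1 B) = 2\<close> N3e])
            then show False using u by linarith
          qed
        qed
      qed
    qed
  qed
qed


lemma gg_nonneg: "0 \<le> gg m1 m2 m3" unfolding gg_def by simp

lemma gg_strict1:
  assumes "1 \<le> k" "k < k'"
  shows "gg k' m2 m3 < gg k m2 m3"
proof -
  have "(real k)\<^sup>2 < (real k')\<^sup>2" using assms by (intro power_strict_mono) auto
  then have "1 / (real k')\<^sup>2 < 1 / (real k)\<^sup>2" using assms by (intro divide_strict_left_mono) auto
  then show ?thesis unfolding gg_def by simp
qed

lemma reduce_gen:
  assumes "finite B" "S \<subseteq> B" "S \<noteq> {}" "S \<subseteq> {a..b}"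
    "\<And>t x. t \<in> B - S \<Longrightarrow> x \<in> {a..b} \<Longrightarrow> b - a \<le> \<bar>x - t\<bar>"
  shows "II a b B = II a b S"
proof (rule II_cong)
  fix x assume x: "x \<in> {a..b}"
  obtain s0 where s0: "s0 \<in> S" using assms(3) by auto
  show "hm B x = hm S x"
  proof (rule hm_reduce[OF assms(1-3)])
    show "\<forall>t\<in>B. \<exists>s\<in>S. (x-s)\<^sup>2 \<le> (x-t)\<^sup>2"
    proof
      fix t assume t: "t \<in> B"
      show "\<exists>s\<in>S. (x-s)\<^sup>2 \<le> (x-t)\<^sup>2"
      proof (cases "t \<in> S")
        case True then show ?thesis by auto
      next
        case False
        have "s0 \<in> {a..b}" using s0 assms(4) by auto
        then have "\<bar>x - s0\<bar> \<le> b - a" using x by auto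
        also have "\<dots> \<le> \<bar>x - t\<bar>" using assms(5)[of t x] t False x by auto
        finally show ?thesis using s0 by (intro bexI[of _ s0] sqle)
      qed
    qed
  qed
qed

lemma cond_opt:
  assumes "a < b" "\<And>x. x \<in> {a..b} \<Longrightarrow> dens x = c" "0 < c"
    "finite S" "S \<noteq> {}" "II a b S = (b-a)^3/(12*(real (card S))\<^sup>2)"
  shows "optimal_n_means (cond_measure P {a..b}) (card S) S"
proof -
  let ?v = "ennreal ((b-a)^3/(12*(real (card S))\<^sup>2) / (b-a))"
  have cS: "S \<in> codebooks (card S)" using assms unfolding codebooks_def by auto
  have q: "quant_err (cond_measure P {a..b}) S = ?v"
    using cond_gen[OF assms(4,5,1,2,3)] assms(6) by simp
  have "?v \<le> Vn (cond_measure P {a..b}) (card S)"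
    unfolding Vn_def
  proof (rule INF_greatest)
    fix B assume B: "B \<in> codebooks (card S)"
    then have fB: "finite B" "B \<noteq> {}" "card B \<le> card S" unfolding codebooks_def by auto
    have cpos: "0 < card B" using fB by (simp add: card_gt_0_iff)
    have "(b-a)^3/(12*(real (card S))\<^sup>2) \<le> (b-a)^3/(12*(real (card B))\<^sup>2)"
    proof (rule divide_left_mono)
      show "12*(real (card B))\<^sup>2 \<le> 12*(real (card S))\<^sup>2" using fB by (simp add: power_mono)
      show "0 \<le> (b-a)^3" using assms by simp
      show "0 < 12*(real (card S))\<^sup>2 * (12*(real (card B))\<^sup>2)" using cpos fB by simp
    qed
    also have "\<dots> \<le> II a b B" using U[OF fB(1,2)] assms(1) by simp
    finally have "(b-a)^3/(12*(real (card S))\<^sup>2) / (b-a) \<le> II a b B / (b-a)"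
      using assms(1) by (intro divide_right_mono) auto
    then have "?v \<le> ennreal (II a b B / (b-a))" by (rule ennreal_leI)
    also have "\<dots> = quant_err (cond_measure P {a..b}) B"
      using cond_gen[OF fB(1,2) assms(1,2,3)] by simp
    finally show "?v \<le> quant_err (cond_measure P {a..b}) B" .
  qed
  moreover have "Vn (cond_measure P {a..b}) (card S) \<le> quant_err (cond_measure P {a..b}) S"
    unfolding Vn_def using cS by (rule INF_lower)
  ultimately have "quant_err (cond_measure P {a..b}) S = Vn (cond_measure P {a..b}) (card S)"
    using q by (metis order_antisym)
  then show ?thesis using cS unfolding optimal_n_means_def by auto
qed


theorem proposition5p8:
  fixes n :: nat and \<alpha> :: "real set"
  assumes "n \<ge> 3"
    and "optimal_n_means P n \<alpha>"
  shows "optimal_n_means (cond_measure P J1) (card (\<alpha> \<inter> J1)) (\<alpha> \<inter> J1)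
       \<and> optimal_n_means (cond_measure P J2) (card (\<alpha> \<inter> J2)) (\<alpha> \<inter> J2)
       \<and> optimal_n_means (cond_measure P J3) (card (\<alpha> \<inter> J3)) (\<alpha> \<inter> J3)
       \<and> n = card (\<alpha> \<inter> J1) + card (\<alpha> \<inter> J2) + card (\<alpha> \<inter> J3)
       \<and> Vn P n = dist_err P (\<alpha> \<inter> J1) J1 + dist_err P (\<alpha> \<inter> J2) J2 + dist_err P (\<alpha> \<inter> J3) J3
       \<and> Vn P n = ennreal (1/216 * (1 / (real (card (\<alpha> \<inter> J1)))\<^sup>2)
                 + 1/3888 * (1 / (real (card (\<alpha> \<inter> J2)))\<^sup>2 + 1 / (real (card (\<alpha> \<inter> J3)))\<^sup>2))"
proof -
  from assms(2) have cb: "\<alpha> \<in> codebooks n" and qe: "quant_err P \<alpha> = Vn P n"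
    unfolding optimal_n_means_def by auto
  from cb have fin: "finite \<alpha>" and ne: "\<alpha> \<noteq> {}" and cA: "card \<alpha> \<le> n"
    unfolding codebooks_def by auto
  have EV: "Vn P n = ennreal (Etot \<alpha>)" using qe quant_err_P[OF fin ne] by simp
  have ub: "Etot \<alpha> \<le> gg m1 m2 m3" if "m1 \<ge> 1" "m2 \<ge> 1" "m3 \<ge> 1" "m1+m2+m3 \<le> n" for m1 m2 m3
  proof -
    have "ennreal (Etot \<alpha>) \<le> ennreal (gg m1 m2 m3)" using UB[OF that] EV by simp
    then show ?thesis using gg_nonneg by (simp add: ennreal_le_iff)
  qed
  have NE: "N1 \<alpha> \<noteq> {}" "N2 \<alpha> \<noteq> {}" "N3 \<alpha> \<noteq> {}"
    using step1[OF fin ne cA assms(1) ub] by auto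
  have fN: "finite (N1 \<alpha>)" "finite (N2 \<alpha>)" "finite (N3 \<alpha>)" using fin unfolding N1_def N2_def N3_def by auto
  have k: "card (N1 \<alpha>) \<ge> 1" "card (N2 \<alpha>) \<ge> 1" "card (N3 \<alpha>) \<ge> 1"
    using NE fN by (simp_all add: Suc_leI card_gt_0_iff)
  have c3: "card \<alpha> = card (N1 \<alpha>) + card (N2 \<alpha>) + card (N3 \<alpha>)" by (rule card3[OF fin])
  have glb: "gg (card (N1 \<alpha>)) (card (N2 \<alpha>)) (card (N3 \<alpha>)) \<le> Etot \<alpha>" by (rule gg_lb(1)[OF fin NE])
  have cn: "card \<alpha> = n"
  proof (rule ccontr)
    assume "card \<alpha> \<noteq> n"
    then have lt: "card \<alpha> < n" using cA by simp
    let ?k1 = "card (N1 \<alpha>) + (n - card \<alpha>)"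
    have "Etot \<alpha> \<le> gg ?k1 (card (N2 \<alpha>)) (card (N3 \<alpha>))" using k lt c3 by (intro ub) auto
    moreover have "gg ?k1 (card (N2 \<alpha>)) (card (N3 \<alpha>)) < gg (card (N1 \<alpha>)) (card (N2 \<alpha>)) (card (N3 \<alpha>))"
      using k lt by (intro gg_strict1) auto
    ultimately show False using glb by linarith
  qed
  have gub: "Etot \<alpha> \<le> gg (card (N1 \<alpha>)) (card (N2 \<alpha>)) (card (N3 \<alpha>))" using k c3 cn by (intro ub) auto
  have inJ: "N1 \<alpha> \<subseteq> J1" "N2 \<alpha> \<subseteq> J2" "N3 \<alpha> \<subseteq> J3"
  proof -
    have "\<not> ((\<exists>s\<in>N1 \<alpha>. s \<notin> J1) \<or> (\<exists>s\<in>N2 \<alpha>. s \<notin> J2) \<or> (\<exists>s\<in>N3 \<alpha>. s \<notin> J3))"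
      using gg_lb(2)[OF fin NE] gub by linarith
    then show "N1 \<alpha> \<subseteq> J1" "N2 \<alpha> \<subseteq> J2" "N3 \<alpha> \<subseteq> J3" by auto
  qed
  have AJ: "\<alpha> \<inter> J1 = N1 \<alpha>" "\<alpha> \<inter> J2 = N2 \<alpha>" "\<alpha> \<inter> J3 = N3 \<alpha>"
    using inJ unfolding N1_def N2_def N3_def J1_def J2_def J3_def by auto
  have r1: "II 0 (1/3) \<alpha> = II 0 (1/3) (N1 \<alpha>)"
  proof (rule reduce_gen[OF fin _ NE(1)])
    show "N1 \<alpha> \<subseteq> \<alpha>" unfolding N1_def by auto
    show "N1 \<alpha> \<subseteq> {0..1/3}" using inJ unfolding J1_def by auto
    fix t x assume t: "t \<in> \<alpha> - N1 \<alpha>" and x: "x \<in> {0..(1/3::real)}"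
    have "t \<in> N2 \<alpha> \<or> t \<in> N3 \<alpha>" using t N_cases by blast
    then have "2/3 \<le> t" using inJ unfolding J2_def J3_def by auto
    then show "1/3 - 0 \<le> \<bar>x - t\<bar>" using x by auto
  qed
  have r2: "II (2/3) (7/9) \<alpha> = II (2/3) (7/9) (N2 \<alpha>)"
  proof (rule reduce_gen[OF fin _ NE(2)])
    show "N2 \<alpha> \<subseteq> \<alpha>" unfolding N2_def by auto
    show "N2 \<alpha> \<subseteq> {2/3..7/9}" using inJ unfolding J2_def by auto
    fix t x assume t: "t \<in> \<alpha> - N2 \<alpha>" and x: "x \<in> {2/3..(7/9::real)}"
    have "t \<in> N1 \<alpha> \<or> t \<in> N3 \<alpha>" using t N_cases by blast
    then have "t \<le> 1/3 \<or> 8/9 \<le> t" using inJ unfolding J1_def J3_def by auto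
    then show "7/9 - 2/3 \<le> \<bar>x - t\<bar>" using x by auto
  qed
  have r3: "II (8/9) 1 \<alpha> = II (8/9) 1 (N3 \<alpha>)"
  proof (rule reduce_gen[OF fin _ NE(3)])
    show "N3 \<alpha> \<subseteq> \<alpha>" unfolding N3_def by auto
    show "N3 \<alpha> \<subseteq> {8/9..1}" using inJ unfolding J3_def by auto
    fix t x assume t: "t \<in> \<alpha> - N3 \<alpha>" and x: "x \<in> {8/9..(1::real)}"
    have "t \<in> N1 \<alpha> \<or> t \<in> N2 \<alpha>" using t N_cases by blast
    then have "t \<le> 7/9" using inJ unfolding J1_def J2_def by auto
    then show "1 - 8/9 \<le> \<bar>x - t\<bar>" using x by auto
  qed
  note l1 = LB1(1)[OF fin NE(1)] and l2 = LB2(1)[OF fin NE(2)] and l3 = LB3(1)[OF fin NE(3)]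
  have eqs: "3/2 * II 0 (1/3) \<alpha> = 1/216 * (1 / (real (card (N1 \<alpha>)))\<^sup>2)"
    "9/4 * II (2/3) (7/9) \<alpha> = 1/3888 * (1 / (real (card (N2 \<alpha>)))\<^sup>2)"
    "9/4 * II (8/9) 1 \<alpha> = 1/3888 * (1 / (real (card (N3 \<alpha>)))\<^sup>2)"
    using l1 l2 l3 gub unfolding gg_def Etot_def distrib_left by linarith+
  have Egg: "Etot \<alpha> = gg (card (N1 \<alpha>)) (card (N2 \<alpha>)) (card (N3 \<alpha>))" using gub glb by linarith
  have de: "dist_err P (N1 \<alpha>) J1 = ennreal (3/2 * II 0 (1/3) \<alpha>)"
     "dist_err P (N2 \<alpha>) J2 = ennreal (9/4 * II (2/3) (7/9) \<alpha>)"
     "dist_err P (N3 \<alpha>) J3 = ennreal (9/4 * II (8/9) 1 \<alpha>)"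
  proof -
    show "dist_err P (N1 \<alpha>) J1 = ennreal (3/2 * II 0 (1/3) \<alpha>)"
      unfolding r1 J1_def by (rule dist_err_gen[OF fN(1) NE(1)]) (auto simp: dens_def J1_def)
    show "dist_err P (N2 \<alpha>) J2 = ennreal (9/4 * II (2/3) (7/9) \<alpha>)"
      unfolding r2 J2_def by (rule dist_err_gen[OF fN(2) NE(2)]) (auto simp: dens_def J1_def J2_def)
    show "dist_err P (N3 \<alpha>) J3 = ennreal (9/4 * II (8/9) 1 \<alpha>)"
      unfolding r3 J3_def by (rule dist_err_gen[OF fN(3) NE(3)]) (auto simp: dens_def J1_def J3_def)
  qed
  have o1: "optimal_n_means (cond_measure P J1) (card (N1 \<alpha>)) (N1 \<alpha>)"
    unfolding J1_def
  proof (rule cond_opt[where c="3/2", OF _ _ _ fN(1) NE(1)])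
    show "II 0 (1/3) (N1 \<alpha>) = (1/3 - 0)^3/(12*(real (card (N1 \<alpha>)))\<^sup>2)"
      using eqs(1) r1 by (simp add: field_simps)
  qed (auto simp: dens_def J1_def)
  have o2: "optimal_n_means (cond_measure P J2) (card (N2 \<alpha>)) (N2 \<alpha>)"
    unfolding J2_def
  proof (rule cond_opt[where c="9/4", OF _ _ _ fN(2) NE(2)])
    show "II (2/3) (7/9) (N2 \<alpha>) = (7/9 - 2/3)^3/(12*(real (card (N2 \<alpha>)))\<^sup>2)"
      using eqs(2) r2 by (simp add: field_simps)
  qed (auto simp: dens_def J1_def J2_def)
  have o3: "optimal_n_means (cond_measure P J3) (card (N3 \<alpha>)) (N3 \<alpha>)"
    unfolding J3_def
  proof (rule cond_opt[where c="9/4", OF _ _ _ fN(3) NE(3)])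
    show "II (8/9) 1 (N3 \<alpha>) = (1 - 8/9)^3/(12*(real (card (N3 \<alpha>)))\<^sup>2)"
      using eqs(3) r3 by (simp add: field_simps)
  qed (auto simp: dens_def J1_def J3_def)
  have nn: "0 \<le> II 0 (1/3) \<alpha>" "0 \<le> II (2/3) (7/9) \<alpha>" "0 \<le> II (8/9) 1 \<alpha>"
    using Etot_nonneg_parts[OF fin ne] by auto
  have sum: "Vn P n = dist_err P (N1 \<alpha>) J1 + dist_err P (N2 \<alpha>) J2 + dist_err P (N3 \<alpha>) J3"
    unfolding de EV Etot_def using nn by (simp add: ennreal_plus[symmetric] del: ennreal_plus)
  have form: "Vn P n = ennreal (1/216 * (1 / (real (card (N1 \<alpha>)))\<^sup>2)
                 + 1/3888 * (1 / (real (card (N2 \<alpha>)))\<^sup>2 + 1 / (real (card (N3 \<alpha>)))\<^sup>2))"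
    unfolding EV Egg gg_def ..
  show ?thesis unfolding AJ using o1 o2 o3 sum form cn c3 by simp
qed


end
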